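(* Define $$p^{\rm Ab}_{\rm c}:=\sup\{p\in[0,1]:\lim_{n\to\infty}P^{\rm Ab}_n(p)=0\},\qquad p^{\rm aB}_{\rm c}:=\inf\{p\in[0,1]:\lim_{n\to\infty}P^{\rm aB}_n(p)=1\}.$$ Then $$\tfrac12\leq p^{\rm Ab}_{\rm c}\leq \tfrac78\qquad\text{and}\qquad \tfrac1{16}\leq p^{\rm aB}_{\rm c}\leq \tfrac12(3-\sqrt5).$$
   Context: Fix $n\geq1$. Two players, Alice and Bob, alternately make moves, Alice first, each making $n$ moves; every move is a choice from $\{1,2\}$. Write Alice's moves as $a=(a_1,\dots,a_n)$ and Bob's as $b=(b_1,\dots,b_n)$, and let $|a|_1:=\#\{k:a_k=1\}$, $|b|_1:=\#\{k:b_k=1\}$. In the game ${\rm Ab}_n(p)$ the outcome is $(a,|b|_1)$; in the game ${\rm aB}_n(p)$ the outcome is $(|a|_1,b)$. To each possible outcome a winner is assigned independently at random: Bob with probability $p$, Alice with probability $1-p$. The players know this assignment and all previous moves. $P^{\rm Ab}_n(p)$ and $P^{\rm aB}_n(p)$ denote the probabilities that Bob has a winning strategy (a rule choosing his moves as a function of previous moves that guarantees a win whatever Alice plays) in ${\rm Ab}_n(p)$ and ${\rm aB}_n(p)$. These are exactly the critical values whose existence is asserted in the sharp threshold theorem: $P^{\rm Ab}_n(p)\to0$ iff $p<p^{\rm Ab}_{\rm c}$ and $\to1$ for $p>p^{\rm Ab}_{\rm c}$; $P^{\rm aB}_n(p)\to0$ for $p<p^{\rm aB}_{\rm c}$ and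 $\to1$ iff $p>p^{\rm aB}_{\rm c}$. *)

theory Defs
  imports Complex_Main
begin

text \<open>A strategy for Bob maps the full history of
previous moves (a_1, b_1, ..., a_k) to his next move b_k.\<close>

fun bob_play :: "(nat list \<Rightarrow> nat) \<Rightarrow> nat list \<Rightarrow> nat list \<Rightarrow> nat list" where
  "bob_play \<sigma> hist [] = []"
| "bob_play \<sigma> hist (x # xs) =
     (let y = \<sigma> (hist @ [x]) in y # bob_play \<sigma> (hist @ [x, y]) xs)"

definition bob_moves :: "(nat list \<Rightarrow> nat) \<Rightarrow> nat list \<Rightarrow> nat list" where
  "bob_moves \<sigma> a = bob_play \<sigma> [] a"

definition move_seqs :: "nat \<Rightarrow> nat list set" where
  "move_seqs n = {a. length a = n \<and> set a \<subseteq> {1, 2}}"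

definition valid_strategy :: "(nat list \<Rightarrow> nat) \<Rightarrow> bool" where
  "valid_strategy \<sigma> \<longleftrightarrow> (\<forall>h. \<sigma> h \<in> {1, 2})"

definition outcomes_Ab :: "nat \<Rightarrow> (nat list \<times> nat) set" where
  "outcomes_Ab n = {(a, k). a \<in> move_seqs n \<and> k \<le> n}"

definition outcomes_aB :: "nat \<Rightarrow> (nat \<times> nat list) set" where
  "outcomes_aB n = {(k, b). k \<le> n \<and> b \<in> move_seqs n}"

definition bob_wins_Ab :: "nat \<Rightarrow> (nat list \<times> nat) set \<Rightarrow> bool" where
  "bob_wins_Ab n B \<longleftrightarrow> (\<exists>\<sigma>. valid_strategy \<sigma> \<and>
     (\<forall>a \<in> move_seqs n. (a, count_list (bob_moves \<sigma> a) 1) \<in> B))"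

definition bob_wins_aB :: "nat \<Rightarrow> (nat \<times> nat list) set \<Rightarrow> bool" where
  "bob_wins_aB n B \<longleftrightarrow> (\<exists>\<sigma>. valid_strategy \<sigma> \<and>
     (\<forall>a \<in> move_seqs n. (count_list a 1, bob_moves \<sigma> a) \<in> B))"

text \<open>Each outcome is independently won by Bob with probability p; the probability of a
given set B of Bob-won outcomes is p^|B| (1-p)^(|O|-|B|).\<close>

definition P_Ab :: "nat \<Rightarrow> real \<Rightarrow> real" where
  "P_Ab n p = (\<Sum>B \<in> {B. B \<subseteq> outcomes_Ab n \<and> bob_wins_Ab n B}.
      p ^ card B * (1 - p) ^ (card (outcomes_Ab n) - card B))"

definition P_aB :: "nat \<Rightarrow> real \<Rightarrow> real" where
  "P_aB n p = (\<Sum>B \<in> {B. B \<subseteq> outcomes_aB n \<and> bob_wins_aB n B}.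
      p ^ card B * (1 - p) ^ (card (outcomes_aB n) - card B))"

definition pc_Ab :: real where
  "pc_Ab = Sup {p \<in> {0..1}. (\<lambda>n. P_Ab n p) \<longlonglongrightarrow> 0}"

definition pc_aB :: real where
  "pc_aB = Inf {p \<in> {0..1}. (\<lambda>n. P_aB n p) \<longlonglongrightarrow> 1}"

end

theory Submission
  imports Defs
begin

definition wt :: "real \<Rightarrow> 'a set \<Rightarrow> 'a set \<Rightarrow> real" where
  "wt p U B = p ^ card B * (1 - p) ^ (card U - card B)"

definition mu :: "real \<Rightarrow> 'a set \<Rightarrow> ('a set \<Rightarrow> bool) \<Rightarrow> real" where
  "mu p U Q = (\<Sum>B \<in> {B. B \<subseteq> U \<and> Q B}. wt p U B)"

lemma mu_empty: "mu p {} Q = (if Q {} then 1 else 0)"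
proof -
  have "{B. B \<subseteq> {} \<and> Q B} = (if Q {} then {{}} else {})" by auto
  then show ?thesis by (simp add: mu_def wt_def)
qed

lemma mu_insert:
  assumes fin: "finite U" and x: "x \<notin> U"
  shows "mu p (insert x U) Q = p * mu p U (\<lambda>B. Q (insert x B)) + (1 - p) * mu p U Q"
proof -
  let ?S = "{B. B \<subseteq> insert x U \<and> Q B}"
  let ?S1 = "{B. B \<subseteq> U \<and> Q B}"
  let ?S2 = "{B. B \<subseteq> U \<and> Q (insert x B)}"
  have split: "?S = ?S1 \<union> insert x ` ?S2"
  proof (rule set_eqI, rule iffI)
    fix B assume "B \<in> ?S"
    then have B: "B \<subseteq> insert x U" "Q B" by auto
    show "B \<in> ?S1 \<union> insert x ` ?S2"
    proof (cases "x \<in> B")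
      case True
      then have "B = insert x (B - {x})" by auto
      moreover have "B - {x} \<in> ?S2" using B True by (auto simp: insert_absorb)
      ultimately show ?thesis by blast
    next
      case False
      then show ?thesis using B by auto
    qed
  next
    fix B assume "B \<in> ?S1 \<union> insert x ` ?S2"
    then show "B \<in> ?S" by auto
  qed
  have disj: "?S1 \<inter> insert x ` ?S2 = {}" using x by auto
  have inj: "inj_on (insert x) ?S2" using x by (auto simp: inj_on_def)
  have finS1: "finite ?S1" using fin by (auto intro: finite_subset[of _ "Pow U"])
  have finS2: "finite ?S2" using fin by (auto intro: finite_subset[of _ "Pow U"])
  have cardO: "card (insert x U) = Suc (card U)" using fin x by simp
  have w1: "wt p (insert x U) B = (1 - p) * wt p U B" if "B \<in> ?S1" for B
  proof -
    have "B \<subseteq> U" using that by auto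
    then have "card B \<le> card U" using fin by (simp add: card_mono)
    then have "Suc (card U) - card B = Suc (card U - card B)" by simp
    then show ?thesis by (simp add: wt_def cardO)
  qed
  have w2: "wt p (insert x U) (insert x B) = p * wt p U B" if "B \<in> ?S2" for B
  proof -
    have B: "B \<subseteq> U" using that by auto
    then have fB: "finite B" using fin finite_subset by auto
    have xB: "x \<notin> B" using B x by auto
    have "card B \<le> card U" using fin B by (simp add: card_mono)
    then show ?thesis using fB xB by (simp add: wt_def cardO)
  qed
  have "mu p (insert x U) Q = sum (wt p (insert x U)) ?S1 + sum (wt p (insert x U)) (insert x ` ?S2)"
    unfolding mu_def split using finS1 finS2 disj by (simp add: sum.union_disjoint)
  also have "sum (wt p (insert x U)) (insert x ` ?S2) = sum (\<lambda>B. wt p (insert x U) (insert x B)) ?S2"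
    using inj by (simp add: sum.reindex)
  also have "\<dots> = p * mu p U (\<lambda>B. Q (insert x B))"
    unfolding mu_def by (simp add: w2 sum_distrib_left)
  also have "sum (wt p (insert x U)) ?S1 = (1 - p) * mu p U Q"
    unfolding mu_def by (simp add: w1 sum_distrib_left)
  finally show ?thesis by simp
qed

lemma wt_nonneg: "0 \<le> p \<Longrightarrow> p \<le> 1 \<Longrightarrow> 0 \<le> wt p U B"
  by (simp add: wt_def)

lemma mu_nonneg: "0 \<le> p \<Longrightarrow> p \<le> 1 \<Longrightarrow> 0 \<le> mu p U Q"
  unfolding mu_def by (rule sum_nonneg) (simp add: wt_nonneg)

lemma finite_subsets_pred: "finite U \<Longrightarrow> finite {B. B \<subseteq> U \<and> Q B}"
  by (auto intro: finite_subset[of _ "Pow U"])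

lemma mu_mono:
  assumes "finite U" "0 \<le> p" "p \<le> 1" "\<And>B. B \<subseteq> U \<Longrightarrow> Q B \<Longrightarrow> R B"
  shows "mu p U Q \<le> mu p U R"
  unfolding mu_def
proof (rule sum_mono2)
  show "finite {B. B \<subseteq> U \<and> R B}" using assms(1) by (rule finite_subsets_pred)
  show "{B. B \<subseteq> U \<and> Q B} \<subseteq> {B. B \<subseteq> U \<and> R B}" using assms(4) by blast
  show "\<And>b. b \<in> {B. B \<subseteq> U \<and> R B} - {B. B \<subseteq> U \<and> Q B} \<Longrightarrow> 0 \<le> wt p U b"
    using assms(2,3) by (simp add: wt_nonneg)
qed

lemma mu_cong:
  assumes "\<And>B. B \<subseteq> U \<Longrightarrow> Q B = R B"
  shows "mu p U Q = mu p U R"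
proof -
  have "{B. B \<subseteq> U \<and> Q B} = {B. B \<subseteq> U \<and> R B}" using assms by auto
  then show ?thesis by (simp add: mu_def)
qed

lemma mu_true: "finite U \<Longrightarrow> mu p U (\<lambda>_. True) = 1"
proof (induction U rule: finite_induct)
  case empty
  then show ?case by (simp add: mu_empty)
next
  case (insert x F)
  then show ?case by (simp add: mu_insert algebra_simps)
qed

lemma mu_false: "mu p U (\<lambda>_. False) = 0"
  by (simp add: mu_def)

lemma mu_compl:
  assumes "finite U"
  shows "mu p U (\<lambda>B. \<not> Q B) = 1 - mu p U Q"
proof -
  let ?A = "{B. B \<subseteq> U \<and> Q B}" and ?C = "{B. B \<subseteq> U \<and> \<not> Q B}"
  have e: "{B. B \<subseteq> U \<and> True} = ?A \<union> ?C" by blast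
  have d: "?A \<inter> ?C = {}" by blast
  have fA: "finite ?A" using assms by (rule finite_subsets_pred)
  have fC: "finite ?C" using assms by (rule finite_subsets_pred)
  have "mu p U (\<lambda>_. True) = sum (wt p U) (?A \<union> ?C)" unfolding mu_def e ..
  also have "\<dots> = sum (wt p U) ?A + sum (wt p U) ?C" using fA fC d by (rule sum.union_disjoint)
  also have "\<dots> = mu p U Q + mu p U (\<lambda>B. \<not> Q B)" unfolding mu_def ..
  finally show ?thesis using mu_true[OF assms, of p] by linarith
qed

lemma mu_le1: "finite U \<Longrightarrow> 0 \<le> p \<Longrightarrow> p \<le> 1 \<Longrightarrow> mu p U Q \<le> 1"
  using mu_mono[of U p Q "\<lambda>_. True"] mu_true[of U p] by simp

lemma mu_or:
  assumes "finite U" "0 \<le> p" "p \<le> 1"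
  shows "mu p U (\<lambda>B. Q B \<or> R B) \<le> mu p U Q + mu p U R"
proof -
  let ?A = "{B. B \<subseteq> U \<and> Q B}" and ?C = "{B. B \<subseteq> U \<and> R B}"
  have eq: "{B. B \<subseteq> U \<and> (Q B \<or> R B)} = ?A \<union> ?C" by auto
  have "sum (wt p U) (?A \<union> ?C) + sum (wt p U) (?A \<inter> ?C) = sum (wt p U) ?A + sum (wt p U) ?C"
    using assms by (simp add: finite_subsets_pred sum.union_inter)
  moreover have "0 \<le> sum (wt p U) (?A \<inter> ?C)" using assms by (simp add: sum_nonneg wt_nonneg)
  ultimately show ?thesis unfolding mu_def eq by linarith
qed

lemma mu_union_bound:
  assumes "finite U" "0 \<le> p" "p \<le> 1" "finite I"
  shows "mu p U (\<lambda>B. \<exists>i\<in>I. Q i B) \<le> (\<Sum>i\<in>I. mu p U (Q i))"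
  using assms(4)
proof (induction I rule: finite_induct)
  case empty
  then show ?case by (simp add: mu_false)
next
  case (insert j I)
  have "mu p U (\<lambda>B. \<exists>i\<in>insert j I. Q i B) = mu p U (\<lambda>B. Q j B \<or> (\<exists>i\<in>I. Q i B))"
    by (rule mu_cong) auto
  also have "\<dots> \<le> mu p U (Q j) + mu p U (\<lambda>B. \<exists>i\<in>I. Q i B)"
    by (rule mu_or[OF assms(1-3)])
  also have "\<dots> \<le> mu p U (Q j) + (\<Sum>i\<in>I. mu p U (Q i))" using insert.IH by simp
  finally show ?case using insert by simp
qed

definition dep :: "('a set \<Rightarrow> bool) \<Rightarrow> 'a set \<Rightarrow> bool" where
  "dep Q S \<longleftrightarrow> (\<forall>B. Q B = Q (B \<inter> S))"

lemma dep_insert_out: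
  assumes "dep Q T" "x \<notin> T"
  shows "Q (insert x B) = Q B"
proof -
  have "Q (insert x B) = Q (insert x B \<inter> T)" using assms(1) unfolding dep_def by blast
  also have "insert x B \<inter> T = B \<inter> T" using assms(2) by auto
  also have "Q (B \<inter> T) = Q B" using assms(1) unfolding dep_def by metis
  finally show ?thesis .
qed

lemma dep_insert_in:
  assumes "dep Q S" "x \<in> S"
  shows "dep (\<lambda>B. Q (insert x B)) S"
  unfolding dep_def
proof
  fix B
  have "Q (insert x B) = Q (insert x B \<inter> S)" using assms(1) unfolding dep_def by blast
  also have "insert x B \<inter> S = insert x (B \<inter> S) \<inter> S" using assms(2) by auto
  also have "Q (insert x (B \<inter> S) \<inter> S) = Q (insert x (B \<inter> S))" using assms(1) unfolding dep_def by metis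
  finally show "Q (insert x B) = Q (insert x (B \<inter> S))" .
qed

lemma mu_indep:
  assumes "finite U" "S \<inter> T = {}" "dep Q1 S" "dep Q2 T"
  shows "mu p U (\<lambda>B. Q1 B \<and> Q2 B) = mu p U Q1 * mu p U Q2"
  using assms
proof (induction U arbitrary: Q1 Q2 rule: finite_induct)
  case empty
  then show ?case by (simp add: mu_empty)
next
  case (insert x F)
  show ?case
  proof (cases "x \<in> S")
    case True
    then have xT: "x \<notin> T" using insert.prems by auto
    have q2: "Q2 (insert x B) = Q2 B" for B
      using insert.prems(3) xT by (rule dep_insert_out)
    have d1: "dep (\<lambda>B. Q1 (insert x B)) S"
      using insert.prems(2) True by (rule dep_insert_in)
    have "mu p (insert x F) (\<lambda>B. Q1 B \<and> Q2 B)
        = p * mu p F (\<lambda>B. Q1 (insert x B) \<and> Q2 B) + (1 - p) * mu p F (\<lambda>B. Q1 B \<and> Q2 B)"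
      using insert.hyps by (simp add: mu_insert q2)
    also have "\<dots> = p * (mu p F (\<lambda>B. Q1 (insert x B)) * mu p F Q2) + (1 - p) * (mu p F Q1 * mu p F Q2)"
      using insert.IH[of "\<lambda>B. Q1 (insert x B)" Q2] insert.IH[of Q1 Q2] insert.prems d1 by simp
    also have "\<dots> = mu p (insert x F) Q1 * mu p (insert x F) Q2"
      using insert.hyps by (simp add: mu_insert q2 algebra_simps)
    finally show ?thesis .
  next
    case False
    have q1: "Q1 (insert x B) = Q1 B" for B
      using insert.prems(2) False by (rule dep_insert_out)
    show ?thesis
    proof (cases "x \<in> T")
      case True
      have d2: "dep (\<lambda>B. Q2 (insert x B)) T"
        using insert.prems(3) True by (rule dep_insert_in)
      have "mu p (insert x F) (\<lambda>B. Q1 B \<and> Q2 B)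
          = p * mu p F (\<lambda>B. Q1 B \<and> Q2 (insert x B)) + (1 - p) * mu p F (\<lambda>B. Q1 B \<and> Q2 B)"
        using insert.hyps by (simp add: mu_insert q1)
      also have "\<dots> = p * (mu p F Q1 * mu p F (\<lambda>B. Q2 (insert x B))) + (1 - p) * (mu p F Q1 * mu p F Q2)"
        using insert.IH[of Q1 "\<lambda>B. Q2 (insert x B)"] insert.IH[of Q1 Q2] insert.prems d2 by simp
      also have "\<dots> = mu p (insert x F) Q1 * mu p (insert x F) Q2"
        using insert.hyps by (simp add: mu_insert q1 algebra_simps)
      finally show ?thesis .
    next
      case xT: False
      have q2: "Q2 (insert x B) = Q2 B" for B
        using insert.prems(3) xT by (rule dep_insert_out)
      have "mu p (insert x F) (\<lambda>B. Q1 B \<and> Q2 B)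
          = p * mu p F (\<lambda>B. Q1 B \<and> Q2 B) + (1 - p) * mu p F (\<lambda>B. Q1 B \<and> Q2 B)"
        using insert.hyps by (simp add: mu_insert q1 q2)
      also have "\<dots> = mu p F (\<lambda>B. Q1 B \<and> Q2 B)" by (simp add: algebra_simps)
      also have "\<dots> = mu p F Q1 * mu p F Q2"
        using insert.IH[of Q1 Q2] insert.prems by simp
      also have "mu p F Q1 = mu p (insert x F) Q1"
        using insert.hyps by (simp add: mu_insert q1 algebra_simps)
      also have "mu p F Q2 = mu p (insert x F) Q2"
        using insert.hyps by (simp add: mu_insert q2 algebra_simps)
      finally show ?thesis .
    qed
  qed
qed

lemma dep_mono:
  assumes "dep Q S" "S \<subseteq> S'"
  shows "dep Q S'"
  unfolding dep_def
proof
  fix B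
  have h: "\<And>C. Q C = Q (C \<inter> S)" using assms(1) unfolding dep_def by blast
  have "Q B = Q (B \<inter> S)" by (rule h)
  also have "B \<inter> S = (B \<inter> S') \<inter> S" using assms(2) by blast
  also have "Q ((B \<inter> S') \<inter> S) = Q (B \<inter> S')" by (rule h[symmetric])
  finally show "Q B = Q (B \<inter> S')" .
qed

lemma dep_all:
  assumes "\<forall>i\<in>I. dep (Q i) (S i)"
  shows "dep (\<lambda>B. \<forall>i\<in>I. Q i B) (\<Union>i\<in>I. S i)"
  unfolding dep_def
proof
  fix B
  have eq: "Q i B = Q i (B \<inter> (\<Union>i\<in>I. S i))" if "i \<in> I" for i
  proof -
    have sub: "S i \<subseteq> (\<Union>i\<in>I. S i)" using that by blast
    have "dep (Q i) (S i)" using assms that by blast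
    then have dd: "dep (Q i) (\<Union>i\<in>I. S i)" using sub by (rule dep_mono)
    then show ?thesis unfolding dep_def by (rule spec)
  qed
  show "(\<forall>i\<in>I. Q i B) = (\<forall>i\<in>I. Q i (B \<inter> (\<Union>i\<in>I. S i)))"
    by (rule ball_cong[OF refl eq])
qed

lemma mu_indep_prod:
  assumes "finite U" "finite I" "\<forall>i\<in>I. dep (Q i) (S i)"
    "\<forall>i\<in>I. \<forall>j\<in>I. i \<noteq> j \<longrightarrow> S i \<inter> S j = {}"
  shows "mu p U (\<lambda>B. \<forall>i\<in>I. Q i B) = (\<Prod>i\<in>I. mu p U (Q i))"
  using assms(2-4)
proof (induction I rule: finite_induct)
  case empty
  then show ?case using mu_true[OF assms(1)] by simp
next
  case (insert j I)
  have "mu p U (\<lambda>B. \<forall>i\<in>insert j I. Q i B) = mu p U (\<lambda>B. Q j B \<and> (\<forall>i\<in>I. Q i B))"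
    by (rule mu_cong) simp
  also have "\<dots> = mu p U (Q j) * mu p U (\<lambda>B. \<forall>i\<in>I. Q i B)"
  proof (rule mu_indep[OF assms(1)])
    show "S j \<inter> (\<Union>i\<in>I. S i) = {}" using insert.prems(2) insert.hyps(2) by fastforce
    show "dep (Q j) (S j)" using insert.prems(1) by simp
    show "dep (\<lambda>B. \<forall>i\<in>I. Q i B) (\<Union>i\<in>I. S i)" using insert.prems(1) by (intro dep_all) simp
  qed
  also have "mu p U (\<lambda>B. \<forall>i\<in>I. Q i B) = (\<Prod>i\<in>I. mu p U (Q i))"
    using insert.IH insert.prems by simp
  finally show ?case using insert.hyps by simp
qed

lemma mu_single:
  assumes "finite U" "s \<in> U"
  shows "mu p U (\<lambda>B. s \<in> B) = p"
proof -
  have U: "U = insert s (U - {s})" using assms(2) by auto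
  have f: "finite (U - {s})" using assms(1) by simp
  have "mu p U (\<lambda>B. s \<in> B) = p * mu p (U - {s}) (\<lambda>B. s \<in> insert s B) + (1 - p) * mu p (U - {s}) (\<lambda>B. s \<in> B)"
    by (subst U, rule mu_insert[OF f]) simp
  also have "mu p (U - {s}) (\<lambda>B. s \<in> insert s B) = 1"
    using mu_true[OF f, of p] by simp
  also have "mu p (U - {s}) (\<lambda>B. s \<in> B) = mu p (U - {s}) (\<lambda>_. False)"
    by (rule mu_cong) auto
  finally show ?thesis by (simp add: mu_false)
qed

lemma mu_single_not:
  assumes "finite U" "s \<in> U"
  shows "mu p U (\<lambda>B. s \<notin> B) = 1 - p"
  using mu_compl[OF assms(1), of p "\<lambda>B. s \<in> B"] mu_single[OF assms] by simp

lemma mu_avoid: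
  assumes "finite U" "S \<subseteq> U"
  shows "mu p U (\<lambda>B. \<forall>s\<in>S. s \<notin> B) = (1 - p) ^ card S"
proof -
  have fS: "finite S" using assms finite_subset by auto
  have "mu p U (\<lambda>B. \<forall>s\<in>S. s \<notin> B) = (\<Prod>s\<in>S. mu p U (\<lambda>B. s \<notin> B))"
    by (rule mu_indep_prod[OF assms(1) fS, where S = "\<lambda>s. {s}"]) (auto simp: dep_def)
  also have "\<dots> = (\<Prod>s\<in>S. 1 - p)"
    using assms by (intro prod.cong refl mu_single_not) auto
  finally show ?thesis by simp
qed

definition up :: "('a set \<Rightarrow> bool) \<Rightarrow> bool" where
  "up Q \<longleftrightarrow> (\<forall>B B'. B \<subseteq> B' \<longrightarrow> Q B \<longrightarrow> Q B')"

lemma harris: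
  assumes "finite U" "0 \<le> p" "p \<le> 1" "up Q1" "up Q2"
  shows "mu p U Q1 * mu p U Q2 \<le> mu p U (\<lambda>B. Q1 B \<and> Q2 B)"
  using assms(1,4,5)
proof (induction U arbitrary: Q1 Q2 rule: finite_induct)
  case empty
  then show ?case by (simp add: mu_empty)
next
  case (insert x F)
  let ?a1 = "mu p F (\<lambda>B. Q1 (insert x B))" and ?a0 = "mu p F Q1"
  let ?b1 = "mu p F (\<lambda>B. Q2 (insert x B))" and ?b0 = "mu p F Q2"
  have u1: "up (\<lambda>B. Q1 (insert x B))" using insert.prems(1) unfolding up_def by (meson insert_mono)
  have u2: "up (\<lambda>B. Q2 (insert x B))" using insert.prems(2) unfolding up_def by (meson insert_mono)
  have a: "?a0 \<le> ?a1"
    by (rule mu_mono[OF insert.hyps(1) assms(2,3)]) (use insert.prems(1) in \<open>unfold up_def, blast\<close>)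
  have b: "?b0 \<le> ?b1"
    by (rule mu_mono[OF insert.hyps(1) assms(2,3)]) (use insert.prems(2) in \<open>unfold up_def, blast\<close>)
  have "mu p (insert x F) Q1 * mu p (insert x F) Q2 = (p * ?a1 + (1 - p) * ?a0) * (p * ?b1 + (1 - p) * ?b0)"
    using insert.hyps by (simp add: mu_insert)
  also have "\<dots> = p * (?a1 * ?b1) + (1 - p) * (?a0 * ?b0) - p * (1 - p) * ((?a1 - ?a0) * (?b1 - ?b0))"
    by (simp add: algebra_simps power2_eq_square)
  also have "\<dots> \<le> p * (?a1 * ?b1) + (1 - p) * (?a0 * ?b0)"
  proof -
    have "0 \<le> p * (1 - p) * ((?a1 - ?a0) * (?b1 - ?b0))"
      using a b assms(2,3) by (intro mult_nonneg_nonneg) auto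
    then show ?thesis by linarith
  qed
  also have "\<dots> \<le> p * mu p F (\<lambda>B. Q1 (insert x B) \<and> Q2 (insert x B)) + (1 - p) * mu p F (\<lambda>B. Q1 B \<and> Q2 B)"
    using insert.IH[OF u1 u2] insert.IH[OF insert.prems] assms(2,3)
    by (intro add_mono mult_left_mono) auto
  also have "\<dots> = mu p (insert x F) (\<lambda>B. Q1 B \<and> Q2 B)"
    using insert.hyps by (simp add: mu_insert)
  finally show ?case .
qed

lemma min_induct[consumes 1, case_names empty insert]:
  fixes K :: "nat set"
  assumes "finite K" "P {}"
    and step: "\<And>k K. finite K \<Longrightarrow> k \<notin> K \<Longrightarrow> (\<forall>x\<in>K. k < x) \<Longrightarrow> P K \<Longrightarrow> P (insert k K)"
  shows "P K"
  using assms(1)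
proof (induction "card K" arbitrary: K rule: less_induct)
  case less
  show ?case
  proof (cases "K = {}")
    case True
    then show ?thesis using assms(2) by simp
  next
    case False
    let ?k = "Min K"
    have kK: "?k \<in> K" using less.prems False by simp
    have K: "K = insert ?k (K - {?k})" using kK by auto
    have f: "finite (K - {?k})" using less.prems by simp
    have lt: "\<forall>x\<in>K - {?k}. ?k < x" using less.prems by (auto simp: order.not_eq_order_implies_strict)
    have "card (K - {?k}) < card K" by (rule card_Diff1_less[OF less.prems kK])
    then have "P (K - {?k})" using less.hyps f by blast
    then have "P (insert ?k (K - {?k}))" using step[OF f _ lt] by simp
    then show ?thesis using K by simp
  qed
qed

fun phil :: "real \<Rightarrow> real \<Rightarrow> nat list \<Rightarrow> real" where
  "phil s l [] = 1"
| "phil s l [x] = s"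
| "phil s l (x # y # r) = (s + l ^ (y - x)) * phil s l (y # r)"

definition Phi :: "real \<Rightarrow> real \<Rightarrow> nat set \<Rightarrow> real" where
  "Phi s l S = phil s l (sorted_list_of_set S)"

lemma Phi_empty[simp]: "Phi s l {} = 1"
  by (simp add: Phi_def)

lemma Phi_single[simp]: "Phi s l {k} = s"
  by (simp add: Phi_def)

lemma phil_nonneg: "0 \<le> s \<Longrightarrow> 0 \<le> l \<Longrightarrow> 0 \<le> phil s l xs"
  by (induction s l xs rule: phil.induct) auto

lemma Phi_nonneg: "0 \<le> s \<Longrightarrow> 0 \<le> l \<Longrightarrow> 0 \<le> Phi s l S"
  by (simp add: Phi_def phil_nonneg)

lemma Phi_insert_min:
  assumes "finite S" "S \<noteq> {}" "\<forall>x\<in>S. k < x"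
  shows "Phi s l (insert k S) = (s + l ^ (Min S - k)) * Phi s l S"
proof -
  have kS: "k \<notin> S" using assms(3) by auto
  have m: "Min (insert k S) = k" using assms by (simp add: Min_insert2 less_imp_le)
  have "sorted_list_of_set (insert k S) = k # sorted_list_of_set S"
    using sorted_list_of_set_nonempty[of "insert k S"] assms(1) m kS by simp
  moreover have "sorted_list_of_set S = Min S # sorted_list_of_set (S - {Min S})"
    using sorted_list_of_set_nonempty[OF assms(1,2)] .
  ultimately show ?thesis unfolding Phi_def by simp
qed

definition pl :: "nat set \<Rightarrow> nat set" where
  "pl S = S \<union> Suc ` S"

lemma pl_empty[simp]: "pl {} = {}" by (simp add: pl_def)
lemma finite_pl[simp]: "finite S \<Longrightarrow> finite (pl S)" by (simp add: pl_def)
lemma pl_eq_empty[simp]: "pl S = {} \<longleftrightarrow> S = {}" by (auto simp: pl_def)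
lemma pl_insert: "pl (insert k S) = insert k (insert (Suc k) (pl S))" by (auto simp: pl_def)
lemma Min_pl: "finite S \<Longrightarrow> S \<noteq> {} \<Longrightarrow> Min (pl S) = Min S"
proof -
  assume f: "finite S" and ne: "S \<noteq> {}"
  have "Min S \<in> pl S" using f ne by (simp add: pl_def)
  moreover have "\<forall>x\<in>pl S. Min S \<le> x"
  proof
    fix x assume "x \<in> pl S"
    then consider "x \<in> S" | y where "y \<in> S" "x = Suc y" by (auto simp: pl_def)
    then show "Min S \<le> x"
    proof cases
      case 1 then show ?thesis using f by simp
    next
      case 2 then have "Min S \<le> y" using f by simp
      then show ?thesis using 2 by simp
    qed
  qed
  ultimately show ?thesis using f ne by (intro Min_eqI) auto
qed
lemma pl_ge: "\<forall>x\<in>S. k < x \<Longrightarrow> \<forall>x\<in>pl S. k < x" by (auto simp: pl_def)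

definition Qf :: "real \<Rightarrow> real \<Rightarrow> nat \<Rightarrow> real" where
  "Qf s l t = (if t = 0 then 1 else s + l ^ t)"

lemma Phi_pl_insert:
  assumes "finite S" "\<forall>x\<in>S. k < x"
  shows "Phi s l (pl (insert k S)) = (s + l) * (if S = {} then s else Qf s l (Min S - Suc k)) * Phi s l (pl S)"
proof (cases "S = {}")
  case True
  have "Phi s l (insert k {Suc k}) = (s + l ^ (Min {Suc k} - k)) * Phi s l {Suc k}"
    by (rule Phi_insert_min) auto
  then show ?thesis using True by (simp add: pl_insert)
next
  case False
  have f: "finite (pl S)" using assms(1) by simp
  have ne: "pl S \<noteq> {}" using False by simp
  have mp: "Min (pl S) = Min S" using Min_pl[OF assms(1) False] .
  have gt: "\<forall>x\<in>pl S. k < x" using pl_ge[OF assms(2)] .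
  have mS: "Min S \<in> S" using assms(1) False by simp
  then have kl: "k < Min S" using assms(2) by blast
  show ?thesis
  proof (cases "Min S = Suc k")
    case True
    have "Suc k \<in> pl S" using mS True by (simp add: pl_def)
    then have e: "pl (insert k S) = insert k (pl S)" by (auto simp: pl_insert)
    have "Phi s l (insert k (pl S)) = (s + l ^ (Min (pl S) - k)) * Phi s l (pl S)"
      by (rule Phi_insert_min[OF f ne gt])
    then show ?thesis using e mp True False by (simp add: Qf_def)
  next
    case ne2: False
    then have lt2: "Suc k < Min S" using kl by simp
    have gt2: "\<forall>x\<in>pl S. Suc k < x"
    proof
      fix x assume "x \<in> pl S"
      then have "Min (pl S) \<le> x" using f by simp
      then show "Suc k < x" using mp lt2 by simp
    qed
    have A: "Phi s l (insert (Suc k) (pl S)) = (s + l ^ (Min S - Suc k)) * Phi s l (pl S)"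
      using Phi_insert_min[OF f ne gt2] mp by simp
    have B: "Phi s l (insert k (insert (Suc k) (pl S))) = (s + l ^ (Min (insert (Suc k) (pl S)) - k)) * Phi s l (insert (Suc k) (pl S))"
      by (rule Phi_insert_min) (use f gt in auto)
    have m3: "Min (insert (Suc k) (pl S)) = Suc k" using f gt2 by (simp add: Min_insert2 less_imp_le)
    have "Min S - Suc k \<noteq> 0" using lt2 by simp
    then show ?thesis using A B m3 False by (simp add: pl_insert Qf_def)
  qed
qed

lemma sum_Pow_insert:
  assumes "finite A" "a \<notin> A"
  shows "(\<Sum>X\<in>Pow (insert a A). f X) = (\<Sum>X\<in>Pow A. f X + f (insert a X))"
proof -
  have d: "Pow A \<inter> insert a ` Pow A = {}" using assms(2) by auto
  have i: "inj_on (insert a) (Pow A)" using assms(2) unfolding inj_on_def by (metis Pow_iff insert_ident subsetD)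
  have "(\<Sum>X\<in>Pow (insert a A). f X) = (\<Sum>X\<in>Pow A. f X) + (\<Sum>X\<in>insert a ` Pow A. f X)"
    unfolding Pow_insert using assms(1) d by (simp add: sum.union_disjoint)
  also have "(\<Sum>X\<in>insert a ` Pow A. f X) = (\<Sum>X\<in>Pow A. f (insert a X))"
    using i by (simp add: sum.reindex)
  finally show ?thesis by (simp add: sum.distrib)
qed

definition Asum :: "real \<Rightarrow> real \<Rightarrow> nat set \<Rightarrow> real" where
  "Asum s l K = (\<Sum>K1\<in>Pow K. Phi s l (pl K1) * Phi s l (pl (K - K1)))"

definition zt :: "real \<Rightarrow> nat set \<Rightarrow> nat set \<Rightarrow> real" where
  "zt l K K1 = (let Y = (if Min K \<in> K1 then K - K1 else K1) in if Y = {} then 0 else l ^ (Min Y - Min K))"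

definition Zsum :: "real \<Rightarrow> real \<Rightarrow> nat set \<Rightarrow> real" where
  "Zsum s l K = (\<Sum>K1\<in>Pow K. Phi s l (pl K1) * Phi s l (pl (K - K1)) * zt l K K1)"

lemma zt_nonneg: "0 \<le> l \<Longrightarrow> 0 \<le> zt l K K1"
  by (simp add: zt_def Let_def)

lemma Asum_nonneg: "0 \<le> s \<Longrightarrow> 0 \<le> l \<Longrightarrow> 0 \<le> Asum s l K"
  unfolding Asum_def by (intro sum_nonneg mult_nonneg_nonneg Phi_nonneg)

lemma Zsum_nonneg: "0 \<le> s \<Longrightarrow> 0 \<le> l \<Longrightarrow> 0 \<le> Zsum s l K"
  unfolding Zsum_def by (intro sum_nonneg mult_nonneg_nonneg Phi_nonneg zt_nonneg)

text \<open>The key two-term identity: the new minimal element k joins either the class X of Min K' or the other class Y.\<close>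

lemma pair_facts:
  fixes s l :: real
  assumes fK: "finite K'" and ne: "K' \<noteq> {}" and kl: "\<forall>x\<in>K'. k < x"
    and XY: "X \<union> Y = K'" "X \<inter> Y = {}" and mX: "Min K' \<in> X"
  defines "e \<equiv> Min K' - Suc k"
  defines "zy \<equiv> (if Y = {} then 0 else l ^ (Min Y - Min K'))"
  shows "Phi s l (pl (insert k X)) = (s + l) * Qf s l e * Phi s l (pl X)"
    and "Phi s l (pl (insert k Y)) = (s + l) * (s + l ^ e * zy) * Phi s l (pl Y)"
    and "Min X = Min K'" and "Min K' - k = Suc e"
    and "Y \<noteq> {} \<Longrightarrow> Min Y - k = Suc e + (Min Y - Min K')"
proof -
  have fX: "finite X" and fY: "finite Y" using fK XY by (auto intro: finite_subset)
  have kX: "\<forall>x\<in>X. k < x" and kY: "\<forall>x\<in>Y. k < x" using kl XY by auto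
  have Xne: "X \<noteq> {}" using mX by auto
  have mK: "Min K' \<in> K'" using fK ne by simp
  have kK: "k < Min K'" using kl mK by blast
  show minX: "Min X = Min K'"
  proof (rule Min_eqI[OF fX])
    show "\<And>y. y \<in> X \<Longrightarrow> Min K' \<le> y" using XY fK by auto
    show "Min K' \<in> X" by (rule mX)
  qed
  show "Phi s l (pl (insert k X)) = (s + l) * Qf s l e * Phi s l (pl X)"
    using Phi_pl_insert[OF fX kX] Xne minX by (simp add: e_def)
  show "Min K' - k = Suc e" using kK by (simp add: e_def)
  have lt: "Min K' < Min Y" if "Y \<noteq> {}"
  proof -
    have mY: "Min Y \<in> Y" using fY that by simp
    have "Min K' \<le> Min Y" using fK XY mY by auto
    moreover have "Min Y \<noteq> Min K'" using mY mX XY by auto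
    ultimately show ?thesis by simp
  qed
  show "Y \<noteq> {} \<Longrightarrow> Min Y - k = Suc e + (Min Y - Min K')"
    using lt kK by (simp add: e_def)
  show "Phi s l (pl (insert k Y)) = (s + l) * (s + l ^ e * zy) * Phi s l (pl Y)"
  proof (cases "Y = {}")
    case True
    then show ?thesis using Phi_pl_insert[OF fY kY] by (simp add: zy_def)
  next
    case False
    have lt': "Min K' < Min Y" using lt[OF False] .
    have ex: "Min Y - Suc k = e + (Min Y - Min K')" using lt' kK by (simp add: e_def)
    have nz: "Min Y - Suc k \<noteq> 0" using lt' kK by simp
    have "Qf s l (Min Y - Suc k) = s + l ^ (Min Y - Suc k)"
      unfolding Qf_def using nz by (rule if_not_P)
    also have "\<dots> = s + l ^ e * l ^ (Min Y - Min K')" by (simp only: ex power_add)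
    finally have "Qf s l (Min Y - Suc k) = s + l ^ e * l ^ (Min Y - Min K')" .
    then show ?thesis using Phi_pl_insert[OF fY kY] False by (simp add: zy_def)
  qed
qed

lemma term_identity:
  fixes s l :: real
  assumes fK: "finite K'" and ne: "K' \<noteq> {}" and kl: "\<forall>x\<in>K'. k < x" and K1: "K1 \<subseteq> K'"
  defines "e \<equiv> Min K' - Suc k"
  defines "T \<equiv> Phi s l (pl K1) * Phi s l (pl (K' - K1))"
  shows "(Phi s l (pl K1) * Phi s l (pl (insert k K' - K1))
       + Phi s l (pl (insert k K1)) * Phi s l (pl (insert k K' - insert k K1))
       = (s + l) * (Qf s l e + s) * T + (s + l) * l ^ e * (T * zt l K' K1))
    \<and> (Phi s l (pl K1) * Phi s l (pl (insert k K' - K1)) * zt l (insert k K') K1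
       + Phi s l (pl (insert k K1)) * Phi s l (pl (insert k K' - insert k K1)) * zt l (insert k K') (insert k K1)
       = (s + l) * Qf s l e * l ^ Suc e * (T * zt l K' K1)
         + l ^ Suc e * ((s + l) * s * T + (s + l) * l ^ e * (T * zt l K' K1)))"
proof -
  have kK': "k \<notin> K'" using kl by auto
  have kK1: "k \<notin> K1" using kK' K1 by auto
  have d1: "insert k K' - K1 = insert k (K' - K1)" using kK1 by auto
  have d2: "insert k K' - insert k K1 = K' - K1" using kK' by auto
  have fK'': "finite (insert k K')" using fK by simp
  have mk: "Min (insert k K') = k" using fK kl by (simp add: Min_insert2 less_imp_le)
  have ztK1: "zt l (insert k K') K1 = (if K1 = {} then 0 else l ^ (Min K1 - k))"
    using kK1 mk by (simp add: zt_def)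
  have ztK2: "zt l (insert k K') (insert k K1) = (if K' - K1 = {} then 0 else l ^ (Min (K' - K1) - k))"
    using mk d2 by (simp add: zt_def)
  show ?thesis
  proof (cases "Min K' \<in> K1")
    case True
    let ?X = K1 and ?Y = "K' - K1"
    have XY: "?X \<union> ?Y = K'" "?X \<inter> ?Y = {}" using K1 by auto
    note F = pair_facts[OF fK ne kl XY True, folded e_def]
    have zt': "zt l K' K1 = (if ?Y = {} then 0 else l ^ (Min ?Y - Min K'))"
      using True by (simp add: zt_def)
    have z1: "zt l (insert k K') K1 = l ^ Suc e" using ztK1 F(3) F(4) True by auto
    have z2: "zt l (insert k K') (insert k K1) = l ^ Suc e * zt l K' K1"
      using ztK2 F(5) zt' by (simp add: power_add)
    show ?thesis unfolding d1 d2 z1 z2 F(1) F(2)[of s l, folded zt'] T_def by (simp add: algebra_simps)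
  next
    case False
    let ?X = "K' - K1" and ?Y = K1
    have XY: "?X \<union> ?Y = K'" "?X \<inter> ?Y = {}" using K1 by auto
    have mX: "Min K' \<in> ?X" using False fK ne by simp
    note F = pair_facts[OF fK ne kl XY mX, folded e_def]
    have zt': "zt l K' K1 = (if ?Y = {} then 0 else l ^ (Min ?Y - Min K'))"
      using False by (simp add: zt_def)
    have z1: "zt l (insert k K') K1 = l ^ Suc e * zt l K' K1"
      using ztK1 F(5) zt' by (simp add: power_add)
    have z2: "zt l (insert k K') (insert k K1) = l ^ Suc e" using ztK2 F(3) F(4) mX by auto
    show ?thesis unfolding d1 d2 z1 z2 F(1) F(2)[of s l, folded zt'] T_def by (simp add: algebra_simps)
  qed
qed

lemma rec_AZ:
  fixes s l :: real
  assumes fK: "finite K'" and ne: "K' \<noteq> {}" and kl: "\<forall>x\<in>K'. k < x"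
  defines "e \<equiv> Min K' - Suc k"
  shows "Asum s l (insert k K') = (s + l) * (Qf s l e + s) * Asum s l K' + (s + l) * l ^ e * Zsum s l K'"
    and "Zsum s l (insert k K') = (s + l) * Qf s l e * l ^ Suc e * Zsum s l K'
           + l ^ Suc e * ((s + l) * s * Asum s l K' + (s + l) * l ^ e * Zsum s l K')"
proof -
  have kK': "k \<notin> K'" using kl by auto
  note TI = term_identity[OF fK ne kl, where s=s and l=l, folded e_def]
  have "Asum s l (insert k K') = (\<Sum>K1\<in>Pow K'. Phi s l (pl K1) * Phi s l (pl (insert k K' - K1))
       + Phi s l (pl (insert k K1)) * Phi s l (pl (insert k K' - insert k K1)))"
    unfolding Asum_def by (rule sum_Pow_insert[OF fK kK'])
  also have "\<dots> = (\<Sum>K1\<in>Pow K'. (s + l) * (Qf s l e + s) * (Phi s l (pl K1) * Phi s l (pl (K' - K1)))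
       + (s + l) * l ^ e * (Phi s l (pl K1) * Phi s l (pl (K' - K1)) * zt l K' K1))"
    by (rule sum.cong[OF refl]) (use TI in blast)
  also have "\<dots> = (s + l) * (Qf s l e + s) * Asum s l K' + (s + l) * l ^ e * Zsum s l K'"
    unfolding Asum_def Zsum_def by (simp add: sum.distrib sum_distrib_left)
  finally show "Asum s l (insert k K') = (s + l) * (Qf s l e + s) * Asum s l K' + (s + l) * l ^ e * Zsum s l K'" .
  have "Zsum s l (insert k K') = (\<Sum>K1\<in>Pow K'. Phi s l (pl K1) * Phi s l (pl (insert k K' - K1)) * zt l (insert k K') K1
       + Phi s l (pl (insert k K1)) * Phi s l (pl (insert k K' - insert k K1)) * zt l (insert k K') (insert k K1))"
    unfolding Zsum_def by (rule sum_Pow_insert[OF fK kK'])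
  also have "\<dots> = (\<Sum>K1\<in>Pow K'. (s + l) * Qf s l e * l ^ Suc e * (Phi s l (pl K1) * Phi s l (pl (K' - K1)) * zt l K' K1)
         + l ^ Suc e * ((s + l) * s * (Phi s l (pl K1) * Phi s l (pl (K' - K1))) + (s + l) * l ^ e * (Phi s l (pl K1) * Phi s l (pl (K' - K1)) * zt l K' K1)))"
    by (rule sum.cong[OF refl]) (use TI in blast)
  also have "\<dots> = (s + l) * Qf s l e * l ^ Suc e * Zsum s l K'
           + l ^ Suc e * ((s + l) * s * Asum s l K' + (s + l) * l ^ e * Zsum s l K')"
    unfolding Asum_def Zsum_def by (simp add: sum.distrib sum_distrib_left distrib_left mult.assoc)
  finally show "Zsum s l (insert k K') = (s + l) * Qf s l e * l ^ Suc e * Zsum s l K'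
           + l ^ Suc e * ((s + l) * s * Asum s l K' + (s + l) * l ^ e * Zsum s l K')" .
qed

lemma AZ_single:
  shows "Asum s l {k} = 2 * (s + l) * s" and "Zsum s l {k} = 0"
proof -
  have P: "Pow {k} = {{}, {k}}" by blast
  have pk: "pl {k} = insert k {Suc k}" by (auto simp: pl_def)
  have ph: "Phi s l (insert k {Suc k}) = (s + l ^ (Min {Suc k} - k)) * Phi s l {Suc k}"
    by (rule Phi_insert_min) auto
  then have ph': "Phi s l (pl {k}) = (s + l) * s" using pk by simp
  show "Asum s l {k} = 2 * (s + l) * s" unfolding Asum_def P using ph' by simp
  show "Zsum s l {k} = 0" unfolding Zsum_def P by (simp add: zt_def)
qed

lemma AZ_empty: "Asum s l {} = 1" "Zsum s l {} = 0"
  by (simp_all add: Asum_def Zsum_def zt_def)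

lemma colA:
  fixes s l :: real
  assumes s0: "0 \<le> s" and s1: "s \<le> 1" and l0: "0 \<le> l" and l1: "l \<le> 1/4"
  shows "(s + l) * (Qf s l e + s + 2 * s * l ^ Suc e) \<le> 2 * (s + l) * s + ((s + l) * (1 + 2 * s * l)) ^ Suc e"
proof -
  define a where "a = s + l"
  define L where "L = (s + l) * (1 + 2 * s * l)"
  have a0: "0 \<le> a" using s0 l0 by (simp add: a_def)
  have L0: "0 \<le> L" using s0 l0 by (simp add: L_def)
  have La: "a \<le> L"
  proof -
    have "a * 1 \<le> a * (1 + 2 * s * l)" using a0 s0 l0 by (intro mult_left_mono) auto
    then show ?thesis by (simp add: a_def L_def)
  qed
  have lL: "l \<le> L" using La s0 by (simp add: a_def)
  show ?thesis
  proof (cases e)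
    case 0
    have "a * (1 + s + 2 * s * l) \<le> 2 * a * s + a * (1 + 2 * s * l)"
    proof -
      have "a * (1 + s + 2 * s * l) = 2 * a * s + a * (1 + 2 * s * l) - a * s" by (simp add: algebra_simps)
      moreover have "0 \<le> a * s" using a0 s0 by simp
      ultimately show ?thesis by linarith
    qed
    moreover have "Qf s l e = 1" using 0 by (simp add: Qf_def)
    ultimately have "a * (Qf s l e + s + 2 * s * l ^ Suc e) \<le> 2 * a * s + L ^ Suc e"
      using 0 by (simp add: L_def a_def)
    then show ?thesis by (simp add: a_def L_def)
  next
    case (Suc e')
    have Q: "Qf s l e = s + l ^ e" using Suc by (simp add: Qf_def)
    have "a * (Qf s l e + s + 2 * s * l ^ Suc e) = 2 * a * s + L * l ^ e"
      unfolding Q by (simp add: a_def L_def algebra_simps)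
    also have "L * l ^ e \<le> L * L ^ e" using L0 l0 lL by (intro mult_left_mono power_mono) auto
    also have "L * L ^ e = L ^ Suc e" by simp
    finally show ?thesis by (simp add: a_def L_def)
  qed
qed

lemma colZ:
  fixes s l :: real
  assumes s0: "0 \<le> s" and s1: "s \<le> 1" and l0: "0 \<le> l" and l1: "l \<le> 1/4"
  shows "(s + l) * (l ^ e + 2 * l ^ Suc e * Qf s l e + 2 * l ^ Suc e * l ^ e)
         \<le> 2 * (2 * (s + l) * s + ((s + l) * (1 + 2 * s * l)) ^ Suc e)"
proof -
  define a where "a = s + l"
  define L where "L = (s + l) * (1 + 2 * s * l)"
  have a0: "0 \<le> a" using s0 l0 by (simp add: a_def)
  have L0: "0 \<le> L" using s0 l0 by (simp add: L_def)
  have La: "a \<le> L"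
  proof -
    have "a * 1 \<le> a * (1 + 2 * s * l)" using a0 s0 l0 by (intro mult_left_mono) auto
    then show ?thesis by (simp add: a_def L_def)
  qed
  have lL: "l \<le> L" using La s0 by (simp add: a_def)
  have sl: "s * l \<le> 1/4"
  proof -
    have "s * l \<le> 1 * (1/4)" using s0 s1 l0 l1 by (intro mult_mono) auto
    then show ?thesis by simp
  qed
  show ?thesis
  proof (cases e)
    case 0
    have sl0: "0 \<le> s * l" using s0 l0 by simp
    have "1 + 4 * l \<le> 2 + 4 * s + 4 * (s * l)" using sl0 s0 l1 by linarith
    then have "a * (1 + 4 * l) \<le> a * (2 + 4 * s + 4 * (s * l))"
      using a0 by (rule mult_left_mono)
    then show ?thesis using 0 by (simp add: Qf_def a_def L_def algebra_simps)
  next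
    case (Suc e')
    have Q: "Qf s l e = s + l ^ e" using Suc by (simp add: Qf_def)
    have ll: "l ^ Suc e \<le> 1/16"
    proof -
      have "l ^ Suc e \<le> l ^ 2" using l0 l1 Suc by (intro power_decreasing) auto
      also have "l ^ 2 \<le> (1/4) ^ 2" using l0 l1 by (intro power_mono) auto
      finally show ?thesis by (simp add: power2_eq_square)
    qed
    have inner: "1 + 2 * l * s + 4 * l ^ Suc e \<le> 2" using sl ll by (simp add: algebra_simps)
    have "a * (l ^ e + 2 * l ^ Suc e * Qf s l e + 2 * l ^ Suc e * l ^ e) = (a * l ^ e) * (1 + 2 * l * s + 4 * l ^ Suc e)"
      unfolding Q by (simp add: algebra_simps)
    also have "\<dots> \<le> (a * l ^ e) * 2" using inner a0 l0 by (intro mult_left_mono) auto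
    also have "a * l ^ e \<le> L * L ^ e" using a0 La l0 lL by (intro mult_mono power_mono) auto
    then have "(a * l ^ e) * 2 \<le> 2 * L ^ Suc e" by simp
    also have "2 * L ^ Suc e \<le> 2 * (2 * a * s + L ^ Suc e)" using a0 s0 by simp
    finally show ?thesis by (simp add: a_def L_def)
  qed
qed

lemma main_ineq:
  fixes s l :: real and K :: "nat set"
  assumes fK: "finite K" and s0: "0 \<le> s" and s1: "s \<le> 1" and l0: "0 \<le> l" and l1: "l \<le> 1/4"
  shows "Asum s l K + 2 * Zsum s l K \<le> Phi (2 * (s + l) * s) ((s + l) * (1 + 2 * s * l)) K"
  using fK
proof (induction K rule: min_induct)
  case empty
  then show ?case by (simp add: AZ_empty)
next
  case (insert k K')
  show ?case
  proof (cases "K' = {}")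
    case True
    then show ?thesis by (simp add: AZ_single)
  next
    case False
    define e where "e = Min K' - Suc k"
    define a where "a = s + l"
    define q where "q = 2 * (s + l) * s + ((s + l) * (1 + 2 * s * l)) ^ Suc e"
    have mK: "Min K' \<in> K'" using insert.hyps(1) False by simp
    have kK: "k < Min K'" using insert.hyps(3) mK by blast
    have de: "Min K' - k = Suc e" using kK by (simp add: e_def)
    note R = rec_AZ[OF insert.hyps(1) False insert.hyps(3), where s=s and l=l, folded e_def]
    have A0: "0 \<le> Asum s l K'" and Z0: "0 \<le> Zsum s l K'" using s0 l0 by (auto intro: Asum_nonneg Zsum_nonneg)
    have cA: "a * (Qf s l e + s + 2 * s * l ^ Suc e) \<le> q"
      using colA[OF s0 s1 l0 l1, of e] by (simp add: a_def q_def)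
    have cZ: "a * (l ^ e + 2 * l ^ Suc e * Qf s l e + 2 * l ^ Suc e * l ^ e) \<le> 2 * q"
      using colZ[OF s0 s1 l0 l1, of e] by (simp add: a_def q_def)
    have "Asum s l (insert k K') + 2 * Zsum s l (insert k K')
        = a * (Qf s l e + s + 2 * s * l ^ Suc e) * Asum s l K'
          + a * (l ^ e + 2 * l ^ Suc e * Qf s l e + 2 * l ^ Suc e * l ^ e) * Zsum s l K'"
      unfolding R a_def by (simp add: algebra_simps)
    also have "\<dots> \<le> q * Asum s l K' + (2 * q) * Zsum s l K'"
      using cA cZ A0 Z0 by (intro add_mono mult_right_mono) auto
    also have "\<dots> = q * (Asum s l K' + 2 * Zsum s l K')" by (simp add: algebra_simps)
    also have "\<dots> \<le> q * Phi (2 * (s + l) * s) ((s + l) * (1 + 2 * s * l)) K'"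
    proof (rule mult_left_mono[OF insert.IH])
      show "0 \<le> q" unfolding q_def using s0 l0 by (intro add_nonneg_nonneg mult_nonneg_nonneg zero_le_power) auto
    qed
    also have "\<dots> = Phi (2 * (s + l) * s) ((s + l) * (1 + 2 * s * l)) (insert k K')"
      using Phi_insert_min[OF insert.hyps(1) False insert.hyps(3)] de by (simp add: q_def)
    finally show ?thesis .
  qed
qed

fun par :: "real \<Rightarrow> nat \<Rightarrow> real \<times> real" where
  "par e 0 = (e, 0)"
| "par e (Suc m) = (let s = fst (par e m); l = snd (par e m) in (2 * (s + l) * s, (s + l) * (1 + 2 * s * l)))"

lemma par_inv:
  assumes e0: "0 \<le> e" and e1: "e \<le> 1/8" and m: "1 \<le> m"
  shows "0 \<le> fst (par e m) \<and> 0 \<le> snd (par e m) \<and> snd (par e m) + 11/5 * fst (par e m) \<le> 1/5"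
  using m
proof (induction m rule: dec_induct)
  case base
  have "e * e \<le> (1/8) * (1/8)" using e0 e1 by (intro mult_mono) auto
  then show ?case using e0 e1 by (simp add: algebra_simps)
next
  case (step m)
  define s where "s = fst (par e m)"
  define l where "l = snd (par e m)"
  have s0: "0 \<le> s" and l0: "0 \<le> l" and inv: "l + 11/5 * s \<le> 1/5" using step.IH by (auto simp: s_def l_def)
  have sl: "s + l \<le> 1/5" using inv s0 by linarith
  have l15: "l \<le> 1/5" using inv s0 by linarith
  have a: "(s + l) * (2 * l + 22/5) \<le> (1/5) * (24/5)"
    using sl l15 s0 l0 by (intro mult_mono) auto
  have key: "s * ((s + l) * (2 * l + 22/5)) \<le> s * (6/5)"
    using a s0 by (intro mult_left_mono) auto
  have "(s + l) * (1 + 2 * s * l) + 11/5 * (2 * (s + l) * s) = s + l + s * ((s + l) * (2 * l + 22/5))"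
    by (simp add: algebra_simps)
  also have "\<dots> \<le> l + 11/5 * s" using key by simp
  finally have "(s + l) * (1 + 2 * s * l) + 11/5 * (2 * (s + l) * s) \<le> 1/5" using inv by linarith
  moreover have "0 \<le> 2 * (s + l) * s" "0 \<le> (s + l) * (1 + 2 * s * l)" using s0 l0 by auto
  ultimately show ?case by (simp add: Let_def s_def[symmetric] l_def[symmetric])
qed

lemma par_bounds:
  assumes e0: "0 \<le> e" and e1: "e \<le> 1/8"
  shows "0 \<le> fst (par e m) \<and> fst (par e m) \<le> 1 \<and> 0 \<le> snd (par e m) \<and> snd (par e m) \<le> 1/4"
proof (cases m)
  case 0
  then show ?thesis using e0 e1 by simp
next
  case (Suc k)
  then have "1 \<le> m" by simp
  from par_inv[OF e0 e1 this] show ?thesis by auto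
qed

lemma par_decay:
  assumes e0: "0 \<le> e" and e1: "e \<le> 1/8" and m: "1 \<le> m"
  shows "fst (par e (Suc m)) \<le> 2/5 * fst (par e m)"
proof -
  define s where "s = fst (par e m)"
  define l where "l = snd (par e m)"
  have s0: "0 \<le> s" and l0: "0 \<le> l" and inv: "l + 11/5 * s \<le> 1/5"
    using par_inv[OF e0 e1 m] by (auto simp: s_def l_def)
  have sl0: "s + l \<le> 1/5" using inv s0 by linarith
  have sl: "2 * (s + l) \<le> 2/5" using sl0 by simp
  have "2 * (s + l) * s \<le> 2/5 * s" using sl s0 by (intro mult_right_mono) auto
  then show ?thesis by (simp add: Let_def s_def[symmetric] l_def[symmetric])
qed

lemma par_tendsto:
  assumes e0: "0 \<le> e" and e1: "e \<le> 1/8"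
  shows "(\<lambda>m. fst (par e m)) \<longlonglongrightarrow> 0"
proof -
  have b: "fst (par e (Suc k)) \<le> (2/5) ^ k * fst (par e 1)" for k
  proof (induction k)
    case 0
    then show ?case by (simp del: par.simps)
  next
    case (Suc k)
    have "fst (par e (Suc (Suc k))) \<le> 2/5 * fst (par e (Suc k))" by (rule par_decay[OF e0 e1]) simp
    also have "\<dots> \<le> 2/5 * ((2/5) ^ k * fst (par e 1))" using Suc.IH by (simp del: par.simps)
    finally show ?case by (simp only: power_Suc mult.assoc)
  qed
  have t: "(\<lambda>k. (2/5) ^ k * fst (par e 1)) \<longlonglongrightarrow> 0"
    by (intro tendsto_mult_left_zero LIMSEQ_power_zero) auto
  have "(\<lambda>k. fst (par e (Suc k))) \<longlonglongrightarrow> 0"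
  proof (rule tendsto_sandwich[OF _ _ tendsto_const t])
    show "\<forall>\<^sub>F k in sequentially. 0 \<le> fst (par e (Suc k))" using par_bounds[OF e0 e1] by (simp del: par.simps)
    show "\<forall>\<^sub>F k in sequentially. fst (par e (Suc k)) \<le> (2/5) ^ k * fst (par e 1)" using b by (simp del: par.simps)
  qed
  then show ?thesis by (rule LIMSEQ_imp_Suc)
qed

lemma Phi_l0: "finite K \<Longrightarrow> Phi s 0 K = s ^ card K"
proof (induction K rule: min_induct)
  case empty
  then show ?case by simp
next
  case (insert k K)
  show ?case
  proof (cases "K = {}")
    case True
    then show ?thesis by simp
  next
    case False
    have mK: "Min K \<in> K" using insert.hyps(1) False by simp
    then have "k < Min K" using insert.hyps(3) by blast
    then have z: "(0::real) ^ (Min K - k) = 0" by simp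
    show ?thesis using Phi_insert_min[OF insert.hyps(1) False insert.hyps(3), of s 0] z insert.IH insert.hyps
      by simp
  qed
qed

fun RR :: "(nat list \<Rightarrow> nat \<Rightarrow> 'a set \<Rightarrow> bool) \<Rightarrow> nat \<Rightarrow> nat list \<Rightarrow> nat \<Rightarrow> 'a set \<Rightarrow> bool" where
  "RR LE 0 pre c B = LE pre c B"
| "RR LE (Suc m) pre c B = (\<exists>x\<in>{1,2}. RR LE m (pre @ [x]) c B \<and> RR LE m (pre @ [x]) (Suc c) B)"

lemma dep_ball:
  assumes "\<forall>c\<in>K. dep (Q c) S"
  shows "dep (\<lambda>B. \<forall>c\<in>K. Q c B) S"
  unfolding dep_def
proof
  fix B
  have "\<And>c. c \<in> K \<Longrightarrow> Q c B = Q c (B \<inter> S)" using assms unfolding dep_def by blast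
  then show "(\<forall>c\<in>K. Q c B) = (\<forall>c\<in>K. Q c (B \<inter> S))" by (rule ball_cong[OF refl])
qed

lemma RR_dep:
  assumes LEdep: "\<forall>pre c. dep (LE pre c) (D pre)" and Dsub: "\<forall>pre x. D (pre @ [x]) \<subseteq> D pre"
  shows "dep (RR LE m pre c) (D pre)"
proof (induction m arbitrary: pre c)
  case 0
  then show ?case using LEdep unfolding dep_def by simp
next
  case (Suc m)
  have h: "RR LE m (pre @ [x]) c' B = RR LE m (pre @ [x]) c' (B \<inter> D pre)" for x c' B
  proof -
    have "dep (RR LE m (pre @ [x]) c') (D (pre @ [x]))" by (rule Suc.IH)
    moreover have "D (pre @ [x]) \<subseteq> D pre" using Dsub by blast
    ultimately have "dep (RR LE m (pre @ [x]) c') (D pre)" by (rule dep_mono)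
    then show ?thesis unfolding dep_def by blast
  qed
  show ?case unfolding dep_def
  proof
    fix B
    show "RR LE (Suc m) pre c B = RR LE (Suc m) pre c (B \<inter> D pre)"
      by (simp only: RR.simps h[where B=B])
  qed
qed

lemma RR_bound:
  fixes U :: "'a set" and D :: "nat list \<Rightarrow> 'a set" and LE :: "nat list \<Rightarrow> nat \<Rightarrow> 'a set \<Rightarrow> bool"
  assumes fin: "finite U" and p0: "0 \<le> p" and p1: "p \<le> 1"
    and Ddisj: "\<forall>pre. D (pre @ [1]) \<inter> D (pre @ [2]) = {}"
    and Dsub: "\<forall>pre x. D (pre @ [x]) \<subseteq> D pre"
    and LEdep: "\<forall>pre c. dep (LE pre c) (D pre)"
    and leaf: "\<forall>pre K. length pre = N \<longrightarrow> set pre \<subseteq> {1,2} \<longrightarrow> finite K \<longrightarrow> (\<forall>c\<in>K. c \<le> M)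
                 \<longrightarrow> mu p U (\<lambda>B. \<forall>c\<in>K. LE pre c B) \<le> e ^ card K"
    and e0: "0 \<le> e" and e1: "e \<le> 1/8"
  shows "length pre + m = N \<Longrightarrow> set pre \<subseteq> {1,2} \<Longrightarrow> finite K \<Longrightarrow> (\<forall>c\<in>K. c + m \<le> M)
         \<Longrightarrow> mu p U (\<lambda>B. \<forall>c\<in>K. RR LE m pre c B) \<le> Phi (fst (par e m)) (snd (par e m)) K"
proof (induction m arbitrary: pre K)
  case 0
  have "mu p U (\<lambda>B. \<forall>c\<in>K. RR LE 0 pre c B) = mu p U (\<lambda>B. \<forall>c\<in>K. LE pre c B)" by simp
  also have "\<dots> \<le> e ^ card K" using leaf "0.prems" by simp
  also have "\<dots> = Phi (fst (par e 0)) (snd (par e 0)) K" using Phi_l0[OF "0.prems"(3), of e] by simp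
  finally show ?case .
next
  case (Suc m)
  define s where "s = fst (par e m)"
  define l where "l = snd (par e m)"
  have sb: "0 \<le> s" "s \<le> 1" "0 \<le> l" "l \<le> 1/4" using par_bounds[OF e0 e1, of m] by (auto simp: s_def l_def)
  let ?R = "\<lambda>x c B. RR LE m (pre @ [x]) c B"
  let ?F = "\<lambda>K1 B. (\<forall>c\<in>pl K1. ?R 1 c B) \<and> (\<forall>c\<in>pl (K - K1). ?R 2 c B)"
  have fP: "finite (Pow K)" using Suc.prems(3) by simp
  have step1: "mu p U (\<lambda>B. \<forall>c\<in>K. RR LE (Suc m) pre c B) \<le> mu p U (\<lambda>B. \<exists>K1\<in>Pow K. ?F K1 B)"
  proof (rule mu_mono[OF fin p0 p1])
    fix B assume "B \<subseteq> U" and H: "\<forall>c\<in>K. RR LE (Suc m) pre c B"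
    let ?K1 = "{c\<in>K. ?R 1 c B \<and> ?R 1 (Suc c) B}"
    have "?F ?K1 B"
    proof
      show "\<forall>c\<in>pl ?K1. ?R 1 c B" by (auto simp: pl_def)
      show "\<forall>c\<in>pl (K - ?K1). ?R 2 c B"
      proof
        fix c assume "c \<in> pl (K - ?K1)"
        then consider "c \<in> K - ?K1" | c0 where "c0 \<in> K - ?K1" "c = Suc c0" by (auto simp: pl_def)
        then show "?R 2 c B"
        proof cases
          case 1
          then have "RR LE (Suc m) pre c B" using H by blast
          then show ?thesis using 1 by auto
        next
          case 2
          then have "RR LE (Suc m) pre c0 B" using H by blast
          then show ?thesis using 2 by auto
        qed
      qed
    qed
    then show "\<exists>K1\<in>Pow K. ?F K1 B" by blast
  qed
  also have "\<dots> \<le> (\<Sum>K1\<in>Pow K. mu p U (?F K1))" by (rule mu_union_bound[OF fin p0 p1 fP])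
  also have "\<dots> \<le> (\<Sum>K1\<in>Pow K. Phi s l (pl K1) * Phi s l (pl (K - K1)))"
  proof (rule sum_mono)
    fix K1 assume K1: "K1 \<in> Pow K"
    have fK1: "finite K1" "finite (K - K1)" using K1 Suc.prems(3) by (auto intro: finite_subset)
    have d1: "dep (\<lambda>B. \<forall>c\<in>pl K1. ?R 1 c B) (D (pre @ [1]))"
      by (rule dep_ball) (use RR_dep[OF LEdep Dsub] in blast)
    have d2: "dep (\<lambda>B. \<forall>c\<in>pl (K - K1). ?R 2 c B) (D (pre @ [2]))"
      by (rule dep_ball) (use RR_dep[OF LEdep Dsub] in blast)
    have "mu p U (?F K1) = mu p U (\<lambda>B. \<forall>c\<in>pl K1. ?R 1 c B) * mu p U (\<lambda>B. \<forall>c\<in>pl (K - K1). ?R 2 c B)"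
      by (rule mu_indep[OF fin _ d1 d2]) (use Ddisj in blast)
    also have "\<dots> \<le> Phi s l (pl K1) * Phi s l (pl (K - K1))"
    proof (rule mult_mono)
      have c1: "\<forall>c\<in>pl K1. c + m \<le> M"
      proof
        fix c assume "c \<in> pl K1"
        then consider "c \<in> K1" | c0 where "c0 \<in> K1" "c = Suc c0" by (auto simp: pl_def)
        then show "c + m \<le> M"
        proof cases
          case 1 then have "Suc c + m \<le> M" using Suc.prems(4) K1 by auto
          then show ?thesis by simp
        next
          case 2 then show ?thesis using Suc.prems(4) K1 by auto
        qed
      qed
      show "mu p U (\<lambda>B. \<forall>c\<in>pl K1. ?R 1 c B) \<le> Phi s l (pl K1)"
        using Suc.IH[of "pre @ [1]" "pl K1"] Suc.prems(1,2) fK1 c1 by (simp add: s_def l_def)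
      have c2: "\<forall>c\<in>pl (K - K1). c + m \<le> M"
      proof
        fix c assume "c \<in> pl (K - K1)"
        then consider "c \<in> K - K1" | c0 where "c0 \<in> K - K1" "c = Suc c0" by (auto simp: pl_def)
        then show "c + m \<le> M"
        proof cases
          case 1 then have "Suc c + m \<le> M" using Suc.prems(4) by auto
          then show ?thesis by simp
        next
          case 2 then show ?thesis using Suc.prems(4) by auto
        qed
      qed
      show "mu p U (\<lambda>B. \<forall>c\<in>pl (K - K1). ?R 2 c B) \<le> Phi s l (pl (K - K1))"
        using Suc.IH[of "pre @ [2]" "pl (K - K1)"] Suc.prems(1,2) fK1 c2 by (simp add: s_def l_def)
      show "0 \<le> Phi s l (pl K1)" using sb by (simp add: Phi_nonneg)
      show "0 \<le> mu p U (\<lambda>B. \<forall>c\<in>pl (K - K1). ?R 2 c B)" using p0 p1 by (rule mu_nonneg)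
    qed
    finally show "mu p U (?F K1) \<le> Phi s l (pl K1) * Phi s l (pl (K - K1))" .
  qed
  also have "\<dots> = Asum s l K" by (simp add: Asum_def)
  also have "\<dots> \<le> Asum s l K + 2 * Zsum s l K" using Zsum_nonneg[of s l K] sb by simp
  also have "\<dots> \<le> Phi (2 * (s + l) * s) ((s + l) * (1 + 2 * s * l)) K"
    by (rule main_ineq[OF Suc.prems(3) sb])
  also have "\<dots> = Phi (fst (par e (Suc m))) (snd (par e (Suc m))) K"
    by (simp add: Let_def s_def l_def)
  finally show ?case .
qed

fun interleave :: "nat list \<Rightarrow> nat list \<Rightarrow> nat list" where
  "interleave (x # xs) (y # ys) = x # y # interleave xs ys"
| "interleave _ _ = []"

fun apart :: "nat list \<Rightarrow> nat list" where
  "apart [] = []"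
| "apart [x] = [x]"
| "apart (x # y # r) = x # apart r"

fun bpart :: "nat list \<Rightarrow> nat list" where
  "bpart [] = []"
| "bpart [x] = []"
| "bpart (x # y # r) = y # bpart r"

lemma interleave_snoc:
  "length xs = length ys \<Longrightarrow> interleave (xs @ [x]) (ys @ [y]) = interleave xs ys @ [x, y]"
  by (induction xs ys rule: list_induct2) auto

lemma apart_snoc:
  "length xs = length ys \<Longrightarrow> apart (interleave xs ys @ [x]) = xs @ [x]"
  by (induction xs ys rule: list_induct2) auto

lemma bpart_snoc:
  "length xs = length ys \<Longrightarrow> bpart (interleave xs ys @ [x]) = ys"
  by (induction xs ys rule: list_induct2) auto

fun BA :: "(nat list \<times> nat) set \<Rightarrow> nat \<Rightarrow> nat list \<Rightarrow> nat \<Rightarrow> bool" where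
  "BA B 0 pre c = ((pre, c) \<in> B)"
| "BA B (Suc m) pre c = (\<forall>x\<in>{1,2}. BA B m (pre @ [x]) (Suc c) \<or> BA B m (pre @ [x]) c)"

definition sigA :: "nat \<Rightarrow> (nat list \<times> nat) set \<Rightarrow> nat list \<Rightarrow> nat" where
  "sigA n B h = (if BA B (n - length (apart h)) (apart h) (Suc (count_list (bpart h) 1)) then 1 else 2)"

lemma valid_sigA: "valid_strategy (sigA n B)"
  by (simp add: valid_strategy_def sigA_def)

lemma winA:
  assumes "BA B m pre c" "length pre = length bs" "count_list bs 1 = c" "length pre + m = n"
    "length a' = m" "set a' \<subseteq> {1, 2}"
  shows "(pre @ a', c + count_list (bob_play (sigA n B) (interleave pre bs) a') 1) \<in> B"
  using assms
proof (induction a' arbitrary: m pre bs c)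
  case Nil
  then show ?case by simp
next
  case (Cons x r)
  then obtain m' where m: "m = Suc m'" by (cases m) auto
  have x: "x \<in> {1, 2}" using Cons.prems(6) by simp
  have r: "length r = m'" "set r \<subseteq> {1, 2}" using Cons.prems(5,6) m by auto
  let ?h = "interleave pre bs"
  let ?y = "sigA n B (?h @ [x])"
  have ap: "apart (?h @ [x]) = pre @ [x]" using Cons.prems(2) by (rule apart_snoc)
  have bp: "bpart (?h @ [x]) = bs" using Cons.prems(2) by (rule bpart_snoc)
  have rem: "n - length (pre @ [x]) = m'" using Cons.prems(4) m by simp
  have y: "?y = (if BA B m' (pre @ [x]) (Suc c) then 1 else 2)"
    unfolding sigA_def ap bp rem Cons.prems(3) ..
  have bp2: "bob_play (sigA n B) ?h (x # r) = ?y # bob_play (sigA n B) (interleave (pre @ [x]) (bs @ [?y])) r"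
    using Cons.prems(2) by (simp add: Let_def interleave_snoc)
  have disj: "BA B m' (pre @ [x]) (Suc c) \<or> BA B m' (pre @ [x]) c"
    using Cons.prems(1) m x by auto
  show ?case
  proof (cases "BA B m' (pre @ [x]) (Suc c)")
    case True
    then have y1: "?y = 1" using y by simp
    have "(pre @ [x] @ r, Suc c + count_list (bob_play (sigA n B) (interleave (pre @ [x]) (bs @ [1])) r) 1) \<in> B"
      using Cons.IH[where m=m' and pre="pre @ [x]" and bs="bs @ [1]" and c="Suc c"] True Cons.prems(2,3,4) m r by simp
    then show ?thesis using bp2 y1 by simp
  next
    case False
    then have y2: "?y = 2" using y by simp
    have b: "BA B m' (pre @ [x]) c" using disj False by simp
    have "(pre @ [x] @ r, c + count_list (bob_play (sigA n B) (interleave (pre @ [x]) (bs @ [2])) r) 1) \<in> B"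
      using Cons.IH[where m=m' and pre="pre @ [x]" and bs="bs @ [2]" and c=c] b Cons.prems(2,3,4) m r by simp
    then show ?thesis using bp2 y2 by simp
  qed
qed

lemma loseA:
  assumes "valid_strategy \<sigma>"
    "\<forall>a'. length a' = m \<and> set a' \<subseteq> {1, 2} \<longrightarrow> (pre @ a', c + count_list (bob_play \<sigma> h a') 1) \<in> B"
  shows "BA B m pre c"
  using assms(2)
proof (induction m arbitrary: pre c h)
  case 0
  then show ?case using spec[OF 0, of "[]"] by simp
next
  case (Suc m)
  show ?case
  proof (simp only: BA.simps, intro ballI)
    fix x :: nat assume x: "x \<in> {1, 2}"
    let ?y = "\<sigma> (h @ [x])"
    have y: "?y \<in> {1, 2}" using assms(1) by (simp add: valid_strategy_def)
    let ?c = "c + (if ?y = 1 then 1 else 0)"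
    have "\<forall>r. length r = m \<and> set r \<subseteq> {1, 2} \<longrightarrow> ((pre @ [x]) @ r, ?c + count_list (bob_play \<sigma> (h @ [x, ?y]) r) 1) \<in> B"
    proof (intro allI impI)
      fix r :: "nat list" assume r: "length r = m \<and> set r \<subseteq> {1, 2}"
      have "(pre @ (x # r), c + count_list (bob_play \<sigma> h (x # r)) 1) \<in> B"
        using Suc.prems x r by (intro Suc.prems[rule_format]) auto
      then show "((pre @ [x]) @ r, ?c + count_list (bob_play \<sigma> (h @ [x, ?y]) r) 1) \<in> B"
        by (cases "\<sigma> (h @ [x]) = 1") (simp_all add: Let_def)
    qed
    then have "BA B m (pre @ [x]) ?c" by (rule Suc.IH)
    then show "BA B m (pre @ [x]) (Suc c) \<or> BA B m (pre @ [x]) c" using y by (auto split: if_splits)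
  qed
qed

lemma bob_wins_Ab_iff: "bob_wins_Ab n B \<longleftrightarrow> BA B n [] 0"
proof
  assume "bob_wins_Ab n B"
  then obtain \<sigma> where s: "valid_strategy \<sigma>" and w: "\<forall>a\<in>move_seqs n. (a, count_list (bob_moves \<sigma> a) 1) \<in> B"
    unfolding bob_wins_Ab_def by blast
  have "\<forall>a'. length a' = n \<and> set a' \<subseteq> {1, 2} \<longrightarrow> ([] @ a', 0 + count_list (bob_play \<sigma> [] a') 1) \<in> B"
    using w by (simp add: move_seqs_def bob_moves_def)
  then show "BA B n [] 0" by (rule loseA[OF s])
next
  assume b: "BA B n [] 0"
  have "\<forall>a\<in>move_seqs n. (a, count_list (bob_moves (sigA n B) a) 1) \<in> B"
  proof
    fix a assume "a \<in> move_seqs n"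
    then have "length a = n" "set a \<subseteq> {1, 2}" by (auto simp: move_seqs_def)
    from winA[OF b _ _ _ this, of "[]"] show "(a, count_list (bob_moves (sigA n B) a) 1) \<in> B"
      by (simp add: bob_moves_def)
  qed
  then show "bob_wins_Ab n B" unfolding bob_wins_Ab_def using valid_sigA by blast
qed

fun BB :: "(nat \<times> nat list) set \<Rightarrow> nat \<Rightarrow> nat \<Rightarrow> nat list \<Rightarrow> bool" where
  "BB B 0 c pb = ((c, pb) \<in> B)"
| "BB B (Suc m) c pb = (\<forall>x::nat\<in>{1,2}. \<exists>y\<in>{1,2}. BB B m (if x = 1 then Suc c else c) (pb @ [y]))"

definition sigB :: "nat \<Rightarrow> (nat \<times> nat list) set \<Rightarrow> nat list \<Rightarrow> nat" where
  "sigB n B h = (if BB B (n - Suc (length (bpart h))) (count_list (apart h) 1) (bpart h @ [1]) then 1 else 2)"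

lemma valid_sigB: "valid_strategy (sigB n B)"
  by (simp add: valid_strategy_def sigB_def)

lemma winB:
  assumes "BB B m c pb" "length as = length pb" "count_list as 1 = c" "length pb + m = n"
    "length a' = m" "set a' \<subseteq> {1, 2}"
  shows "(c + count_list a' 1, pb @ bob_play (sigB n B) (interleave as pb) a') \<in> B"
  using assms
proof (induction a' arbitrary: m as pb c)
  case Nil
  then show ?case by simp
next
  case (Cons x r)
  then obtain m' where m: "m = Suc m'" by (cases m) auto
  have x: "x \<in> {1, 2}" using Cons.prems(6) by simp
  have r: "length r = m'" "set r \<subseteq> {1, 2}" using Cons.prems(5,6) m by auto
  let ?h = "interleave as pb"
  let ?y = "sigB n B (?h @ [x])"
  let ?c = "if x = 1 then Suc c else c"
  have ap: "apart (?h @ [x]) = as @ [x]" using Cons.prems(2) by (rule apart_snoc)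
  have bp: "bpart (?h @ [x]) = pb" using Cons.prems(2) by (rule bpart_snoc)
  have rem: "n - Suc (length pb) = m'" using Cons.prems(4) m by simp
  have cnt: "count_list (as @ [x]) 1 = ?c" using Cons.prems(3) by simp
  have y: "?y = (if BB B m' ?c (pb @ [1]) then 1 else 2)"
    unfolding sigB_def ap bp rem cnt ..
  have bp2: "bob_play (sigB n B) ?h (x # r) = ?y # bob_play (sigB n B) (interleave (as @ [x]) (pb @ [?y])) r"
    using Cons.prems(2) by (simp add: Let_def interleave_snoc)
  have ex: "\<exists>y\<in>{1,2}. BB B m' ?c (pb @ [y])" using Cons.prems(1) m x by auto
  have cnt2: "c + count_list (x # r) 1 = ?c + count_list r 1" by simp
  obtain y0 where y0: "y0 \<in> {1,2}" "BB B m' ?c (pb @ [y0])" "?y = y0"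
  proof (cases "BB B m' ?c (pb @ [1])")
    case True
    then show ?thesis using that y by simp
  next
    case False
    then have "BB B m' ?c (pb @ [2])" using ex by auto
    then show ?thesis using that y False by simp
  qed
  have "(?c + count_list r 1, (pb @ [y0]) @ bob_play (sigB n B) (interleave (as @ [x]) (pb @ [y0])) r) \<in> B"
    using Cons.IH[where m=m' and as="as @ [x]" and pb="pb @ [y0]" and c="?c"] y0(2) Cons.prems(2,4) cnt m r
    by simp
  then show ?case using bp2 y0(3) cnt2 by simp
qed

lemma loseB:
  assumes "valid_strategy \<sigma>"
    "\<forall>a'. length a' = m \<and> set a' \<subseteq> {1, 2} \<longrightarrow> (c + count_list a' 1, pb @ bob_play \<sigma> h a') \<in> B"
  shows "BB B m c pb"
  using assms(2)
proof (induction m arbitrary: c pb h)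
  case 0
  then show ?case using spec[OF 0, of "[]"] by simp
next
  case (Suc m)
  show ?case
  proof (simp only: BB.simps, intro ballI)
    fix x :: nat assume x: "x \<in> {1, 2}"
    let ?y = "\<sigma> (h @ [x])"
    let ?c = "if x = 1 then Suc c else c"
    have y: "?y \<in> {1, 2}" using assms(1) by (simp add: valid_strategy_def)
    have "\<forall>r. length r = m \<and> set r \<subseteq> {1, 2} \<longrightarrow> (?c + count_list r 1, (pb @ [?y]) @ bob_play \<sigma> (h @ [x, ?y]) r) \<in> B"
    proof (intro allI impI)
      fix r :: "nat list" assume r: "length r = m \<and> set r \<subseteq> {1, 2}"
      have "(c + count_list (x # r) 1, pb @ bob_play \<sigma> h (x # r)) \<in> B"
        using Suc.prems x r by (intro Suc.prems[rule_format]) auto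
      then show "(?c + count_list r 1, (pb @ [?y]) @ bob_play \<sigma> (h @ [x, ?y]) r) \<in> B"
        by (cases "x = 1") (simp_all add: Let_def)
    qed
    then have "BB B m ?c (pb @ [?y])" by (rule Suc.IH)
    then show "\<exists>y\<in>{1,2}. BB B m ?c (pb @ [y])" using y by blast
  qed
qed

lemma bob_wins_aB_iff: "bob_wins_aB n B \<longleftrightarrow> BB B n 0 []"
proof
  assume "bob_wins_aB n B"
  then obtain \<sigma> where s: "valid_strategy \<sigma>" and w: "\<forall>a\<in>move_seqs n. (count_list a 1, bob_moves \<sigma> a) \<in> B"
    unfolding bob_wins_aB_def by blast
  have "\<forall>a'. length a' = n \<and> set a' \<subseteq> {1, 2} \<longrightarrow> (0 + count_list a' 1, [] @ bob_play \<sigma> [] a') \<in> B"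
    using w by (simp add: move_seqs_def bob_moves_def)
  then show "BB B n 0 []" by (rule loseB[OF s])
next
  assume b: "BB B n 0 []"
  have "\<forall>a\<in>move_seqs n. (count_list a 1, bob_moves (sigB n B) a) \<in> B"
  proof
    fix a assume "a \<in> move_seqs n"
    then have "length a = n" "set a \<subseteq> {1, 2}" by (auto simp: move_seqs_def)
    from winB[OF b _ _ _ this, of "[]"] show "(count_list a 1, bob_moves (sigB n B) a) \<in> B"
      by (simp add: bob_moves_def)
  qed
  then show "bob_wins_aB n B" unfolding bob_wins_aB_def using valid_sigB by blast
qed

lemma finite_move_seqs: "finite (move_seqs n)"
proof -
  have "move_seqs n = {xs. set xs \<subseteq> {1, 2} \<and> length xs = n}" by (auto simp: move_seqs_def)
  then show ?thesis by (simp add: finite_lists_length_eq)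
qed

lemma finite_outcomes_Ab: "finite (outcomes_Ab n)"
proof -
  have "outcomes_Ab n \<subseteq> move_seqs n \<times> {..n}" by (auto simp: outcomes_Ab_def)
  then show ?thesis by (rule finite_subset) (simp add: finite_move_seqs)
qed

lemma finite_outcomes_aB: "finite (outcomes_aB n)"
proof -
  have "outcomes_aB n \<subseteq> {..n} \<times> move_seqs n" by (auto simp: outcomes_aB_def)
  then show ?thesis by (rule finite_subset) (simp add: finite_move_seqs)
qed

lemma P_Ab_mu: "P_Ab n p = mu p (outcomes_Ab n) (\<lambda>B. BA B n [] 0)"
proof -
  have "P_Ab n p = mu p (outcomes_Ab n) (bob_wins_Ab n)"
    by (simp add: P_Ab_def mu_def wt_def)
  also have "\<dots> = mu p (outcomes_Ab n) (\<lambda>B. BA B n [] 0)"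
    by (rule mu_cong) (simp add: bob_wins_Ab_iff)
  finally show ?thesis .
qed

lemma P_aB_mu: "P_aB n p = mu p (outcomes_aB n) (\<lambda>B. BB B n 0 [])"
proof -
  have "P_aB n p = mu p (outcomes_aB n) (bob_wins_aB n)"
    by (simp add: P_aB_def mu_def wt_def)
  also have "\<dots> = mu p (outcomes_aB n) (\<lambda>B. BB B n 0 [])"
    by (rule mu_cong) (simp add: bob_wins_aB_iff)
  finally show ?thesis .
qed

definition LEab :: "nat list \<Rightarrow> nat \<Rightarrow> (nat list \<times> nat) set \<Rightarrow> bool" where
  "LEab pre c B = ((pre, c) \<notin> B)"

lemma notBA_RR: "(\<not> BA B m pre c) = RR LEab m pre c B"
  by (induction m arbitrary: pre c) (auto simp: LEab_def)

definition DA :: "nat list \<Rightarrow> (nat list \<times> nat) set" where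
  "DA pre = {(a, k). \<exists>s. a = pre @ s}"

lemma P_Ab_high:
  assumes p1: "p \<le> 1" and p0: "7/8 \<le> p"
  shows "1 - fst (par (1 - p) n) \<le> P_Ab n p"
proof -
  let ?U = "outcomes_Ab n"
  have fin: "finite ?U" by (rule finite_outcomes_Ab)
  have pp: "0 \<le> p" using p0 by simp
  have e0: "0 \<le> 1 - p" and e1: "1 - p \<le> 1/8" using p1 p0 by auto
  have Ddisj: "\<forall>pre. DA (pre @ [1]) \<inter> DA (pre @ [2]) = {}" by (auto simp: DA_def)
  have Dsub: "\<forall>pre x. DA (pre @ [x]) \<subseteq> DA pre" by (auto simp: DA_def)
  have LEdep: "\<forall>pre c. dep (LEab pre c) (DA pre)" by (auto simp: dep_def LEab_def DA_def)
  have leaf: "\<forall>pre K. length pre = n \<longrightarrow> set pre \<subseteq> {1,2} \<longrightarrow> finite K \<longrightarrow> (\<forall>c\<in>K. c \<le> n)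
                 \<longrightarrow> mu p ?U (\<lambda>B. \<forall>c\<in>K. LEab pre c B) \<le> (1 - p) ^ card K"
  proof (intro allI impI)
    fix pre :: "nat list" and K :: "nat set"
    assume h: "length pre = n" "set pre \<subseteq> {1,2}" "finite K" "\<forall>c\<in>K. c \<le> n"
    let ?S = "(\<lambda>c. (pre, c)) ` K"
    have sub: "?S \<subseteq> ?U" using h by (auto simp: outcomes_Ab_def move_seqs_def)
    have "mu p ?U (\<lambda>B. \<forall>c\<in>K. LEab pre c B) = mu p ?U (\<lambda>B. \<forall>s\<in>?S. s \<notin> B)"
      by (rule mu_cong) (auto simp: LEab_def)
    also have "\<dots> = (1 - p) ^ card ?S" by (rule mu_avoid[OF fin sub])
    also have "card ?S = card K" by (rule card_image) (simp add: inj_on_def)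
    finally show "mu p ?U (\<lambda>B. \<forall>c\<in>K. LEab pre c B) \<le> (1 - p) ^ card K" by simp
  qed
  have "mu p ?U (\<lambda>B. \<forall>c\<in>{0}. RR LEab n [] c B) \<le> Phi (fst (par (1 - p) n)) (snd (par (1 - p) n)) {0}"
    by (rule RR_bound[OF fin pp p1 Ddisj Dsub LEdep leaf e0 e1]) auto
  then have b: "mu p ?U (\<lambda>B. \<not> BA B n [] 0) \<le> fst (par (1 - p) n)"
    by (simp add: notBA_RR)
  have "P_Ab n p = 1 - mu p ?U (\<lambda>B. \<not> BA B n [] 0)"
    unfolding P_Ab_mu using mu_compl[OF fin, of p "\<lambda>B. BA B n [] 0"] by simp
  then show ?thesis using b by simp
qed

definition LEaB :: "nat list \<Rightarrow> nat \<Rightarrow> (nat \<times> nat list) set \<Rightarrow> bool" where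
  "LEaB pb c B = (\<exists>y\<in>{1,2}. (c, pb @ [y]) \<in> B)"

lemma YB_RR: "(\<exists>y\<in>{1,2}. BB B m c (pb @ [y])) = RR LEaB m pb c B"
proof (induction m arbitrary: c pb)
  case 0
  then show ?case by (simp add: LEaB_def)
next
  case (Suc m)
  have "RR LEaB (Suc m) pb c B = (\<exists>y\<in>{1,2}. (\<exists>y'\<in>{1,2}. BB B m c ((pb @ [y]) @ [y'])) \<and> (\<exists>y'\<in>{1,2}. BB B m (Suc c) ((pb @ [y]) @ [y'])))"
    by (simp only: RR.simps Suc.IH[symmetric])
  also have "\<dots> = (\<exists>y\<in>{1,2}. BB B (Suc m) c (pb @ [y]))" by auto
  finally show ?case by simp
qed

definition DB :: "nat list \<Rightarrow> (nat \<times> nat list) set" where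
  "DB pb = {(c, b). \<exists>s. b = pb @ s}"

lemma P_aB_low:
  assumes p0: "0 \<le> p" and p1: "p \<le> 1/16"
  shows "P_aB (Suc n) p \<le> fst (par (1 - (1 - p)^2) n)"
proof -
  let ?U = "outcomes_aB (Suc n)"
  let ?e = "1 - (1 - p)^2"
  have fin: "finite ?U" by (rule finite_outcomes_aB)
  have pp: "p \<le> 1" using p1 by simp
  have e0: "0 \<le> ?e"
  proof -
    have "(1 - p)^2 \<le> 1^2" using p0 pp by (intro power_mono) auto
    then show ?thesis by simp
  qed
  have e1: "?e \<le> 1/8"
  proof -
    have "?e = p * (2 - p)" by (simp add: power2_eq_square algebra_simps)
    also have "\<dots> \<le> (1/16) * 2" using p0 p1 by (intro mult_mono) auto
    finally show ?thesis by simp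
  qed
  have Ddisj: "\<forall>pb. DB (pb @ [1]) \<inter> DB (pb @ [2]) = {}" by (auto simp: DB_def)
  have Dsub: "\<forall>pb x. DB (pb @ [x]) \<subseteq> DB pb" by (auto simp: DB_def)
  have LEdep: "\<forall>pb c. dep (LEaB pb c) (DB pb)" by (auto simp: dep_def LEaB_def DB_def)
  have leaf: "\<forall>pb K. length pb = n \<longrightarrow> set pb \<subseteq> {1,2} \<longrightarrow> finite K \<longrightarrow> (\<forall>c\<in>K. c \<le> Suc n)
                 \<longrightarrow> mu p ?U (\<lambda>B. \<forall>c\<in>K. LEaB pb c B) \<le> ?e ^ card K"
  proof (intro allI impI)
    fix pb :: "nat list" and K :: "nat set"
    assume h: "length pb = n" "set pb \<subseteq> {1,2}" "finite K" "\<forall>c\<in>K. c \<le> Suc n"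
    let ?S = "\<lambda>c. {(c, pb @ [1]), (c, pb @ [2])}"
    have one: "mu p ?U (LEaB pb c) = ?e" if c: "c \<in> K" for c
    proof -
      have sub: "?S c \<subseteq> ?U" using h c by (auto simp: outcomes_aB_def move_seqs_def)
      have "mu p ?U (LEaB pb c) = mu p ?U (\<lambda>B. \<not> (\<forall>s\<in>?S c. s \<notin> B))"
        by (rule mu_cong) (auto simp: LEaB_def)
      also have "\<dots> = 1 - mu p ?U (\<lambda>B. \<forall>s\<in>?S c. s \<notin> B)" by (rule mu_compl[OF fin])
      also have "mu p ?U (\<lambda>B. \<forall>s\<in>?S c. s \<notin> B) = (1 - p) ^ card (?S c)" by (rule mu_avoid[OF fin sub])
      also have "card (?S c) = 2" by simp
      finally show ?thesis .
    qed
    have "mu p ?U (\<lambda>B. \<forall>c\<in>K. LEaB pb c B) = (\<Prod>c\<in>K. mu p ?U (LEaB pb c))"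
      by (rule mu_indep_prod[OF fin h(3), where S = ?S]) (auto simp: dep_def LEaB_def)
    also have "\<dots> = (\<Prod>c\<in>K. ?e)" using one by (intro prod.cong) auto
    finally show "mu p ?U (\<lambda>B. \<forall>c\<in>K. LEaB pb c B) \<le> ?e ^ card K" by simp
  qed
  have "mu p ?U (\<lambda>B. \<forall>c\<in>{0}. RR LEaB n [] c B) \<le> Phi (fst (par ?e n)) (snd (par ?e n)) {0}"
    by (rule RR_bound[OF fin p0 pp Ddisj Dsub LEdep leaf e0 e1]) auto
  then have b: "mu p ?U (\<lambda>B. RR LEaB n [] 0 B) \<le> fst (par ?e n)" by simp
  have "P_aB (Suc n) p \<le> mu p ?U (\<lambda>B. RR LEaB n [] 0 B)"
    unfolding P_aB_mu
  proof (rule mu_mono[OF fin p0 pp])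
    fix B assume "BB B (Suc n) 0 []"
    then have "\<exists>y\<in>{1,2}. BB B n 0 ([] @ [y])" by auto
    then show "RR LEaB n [] 0 B" using YB_RR by blast
  qed
  then show ?thesis using b by simp
qed

lemma dep_not: "dep Q S \<Longrightarrow> dep (\<lambda>B. \<not> Q B) S"
  unfolding dep_def by metis

fun GA :: "(nat list \<times> nat) set \<Rightarrow> nat \<Rightarrow> nat list \<Rightarrow> nat \<Rightarrow> nat \<Rightarrow> bool" where
  "GA B 0 pre lo hi = (\<forall>c\<in>{lo..hi}. (pre, c) \<notin> B)"
| "GA B (Suc m) pre lo hi = (GA B m (pre @ [1]) lo (Suc hi) \<or> GA B m (pre @ [2]) lo (Suc hi))"

lemma GA_imp: "GA B m pre lo hi \<Longrightarrow> lo \<le> c \<Longrightarrow> c \<le> hi \<Longrightarrow> \<not> BA B m pre c"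
proof (induction m arbitrary: pre hi c)
  case 0
  then show ?case by auto
next
  case (Suc m)
  from Suc.prems(1) obtain x where x: "x \<in> {1, 2}" and g: "GA B m (pre @ [x]) lo (Suc hi)" by auto
  have "\<not> BA B m (pre @ [x]) c" using Suc.IH[OF g] Suc.prems by simp
  moreover have "\<not> BA B m (pre @ [x]) (Suc c)" using Suc.IH[OF g] Suc.prems by simp
  ultimately show ?case using x by auto
qed

lemma GA_dep: "dep (\<lambda>B. GA B m pre lo hi) (DA pre)"
proof (induction m arbitrary: pre hi)
  case 0
  show ?case unfolding dep_def
  proof
    fix B
    have "\<And>c. ((pre, c) \<in> B) = ((pre, c) \<in> B \<inter> DA pre)" by (auto simp: DA_def)
    then show "GA B 0 pre lo hi = GA (B \<inter> DA pre) 0 pre lo hi" by simp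
  qed
next
  case (Suc m)
  have h: "GA B m (pre @ [x]) lo h' = GA (B \<inter> DA pre) m (pre @ [x]) lo h'" for x h' B
  proof -
    have "dep (\<lambda>B. GA B m (pre @ [x]) lo h') (DA (pre @ [x]))" by (rule Suc.IH)
    moreover have "DA (pre @ [x]) \<subseteq> DA pre" by (auto simp: DA_def)
    ultimately have "dep (\<lambda>B. GA B m (pre @ [x]) lo h') (DA pre)" by (rule dep_mono)
    then show ?thesis unfolding dep_def by blast
  qed
  show ?case unfolding dep_def
  proof
    fix B
    show "GA B (Suc m) pre lo hi = GA (B \<inter> DA pre) (Suc m) pre lo hi"
      by (simp only: GA.simps h[where B=B])
  qed
qed

lemma GA_mu:
  assumes p0: "0 \<le> p" and p1: "p \<le> 1"
  shows "length pre + m = n \<Longrightarrow> set pre \<subseteq> {1,2} \<Longrightarrow> lo \<le> hi \<Longrightarrow> hi + m \<le> n \<Longrightarrow>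
    mu p (outcomes_Ab n) (\<lambda>B. GA B m pre lo hi) = 1 - (1 - (1 - p) ^ (Suc (hi - lo) + m)) ^ (2 ^ m)"
proof (induction m arbitrary: pre hi)
  case 0
  let ?S = "(\<lambda>c. (pre, c)) ` {lo..hi}"
  have fin: "finite (outcomes_Ab n)" by (rule finite_outcomes_Ab)
  have sub: "?S \<subseteq> outcomes_Ab n" using "0.prems" by (auto simp: outcomes_Ab_def move_seqs_def)
  have "mu p (outcomes_Ab n) (\<lambda>B. GA B 0 pre lo hi) = mu p (outcomes_Ab n) (\<lambda>B. \<forall>s\<in>?S. s \<notin> B)"
    by (rule mu_cong) auto
  also have "\<dots> = (1 - p) ^ card ?S" by (rule mu_avoid[OF fin sub])
  also have "card ?S = Suc (hi - lo)"
  proof -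
    have "card ?S = card {lo..hi}" by (rule card_image) (simp add: inj_on_def)
    then show ?thesis using "0.prems"(3) by simp
  qed
  finally show ?case by simp
next
  case (Suc m)
  let ?U = "outcomes_Ab n"
  have fin: "finite ?U" by (rule finite_outcomes_Ab)
  let ?g = "1 - (1 - (1 - p) ^ (Suc (Suc hi - lo) + m)) ^ (2 ^ m)"
  have g: "mu p ?U (\<lambda>B. GA B m (pre @ [x]) lo (Suc hi)) = ?g" if "x \<in> {1,2}" for x
    using Suc.IH[of "pre @ [x]" "Suc hi"] Suc.prems that by simp
  have "mu p ?U (\<lambda>B. GA B (Suc m) pre lo hi)
      = mu p ?U (\<lambda>B. \<not> (\<not> GA B m (pre @ [1]) lo (Suc hi) \<and> \<not> GA B m (pre @ [2]) lo (Suc hi)))"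
    by (rule mu_cong) simp
  also have "\<dots> = 1 - mu p ?U (\<lambda>B. \<not> GA B m (pre @ [1]) lo (Suc hi) \<and> \<not> GA B m (pre @ [2]) lo (Suc hi))"
    by (rule mu_compl[OF fin])
  also have "mu p ?U (\<lambda>B. \<not> GA B m (pre @ [1]) lo (Suc hi) \<and> \<not> GA B m (pre @ [2]) lo (Suc hi))
      = mu p ?U (\<lambda>B. \<not> GA B m (pre @ [1]) lo (Suc hi)) * mu p ?U (\<lambda>B. \<not> GA B m (pre @ [2]) lo (Suc hi))"
    by (rule mu_indep[OF fin _ dep_not[OF GA_dep] dep_not[OF GA_dep]]) (auto simp: DA_def)
  also have "\<dots> = (1 - ?g) * (1 - ?g)" using g mu_compl[OF fin] by simp
  also have "(1 - ?g) * (1 - ?g) = (1 - (1 - p) ^ (Suc (hi - lo) + Suc m)) ^ (2 ^ Suc m)"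
  proof -
    have e: "Suc (Suc hi - lo) + m = Suc (hi - lo) + Suc m" using Suc.prems(3) by simp
    show ?thesis unfolding e by (simp add: power_mult[symmetric] power2_eq_square[symmetric] mult.commute)
  qed
  finally show ?case .
qed

lemma P_Ab_low_bound:
  assumes p0: "0 \<le> p" and p1: "p \<le> 1"
  shows "P_Ab n p \<le> (1 - (1 - p) ^ Suc n) ^ (2 ^ n)"
proof -
  let ?U = "outcomes_Ab n"
  have fin: "finite ?U" by (rule finite_outcomes_Ab)
  have "P_Ab n p \<le> mu p ?U (\<lambda>B. \<not> GA B n [] 0 0)"
    unfolding P_Ab_mu
    by (rule mu_mono[OF fin p0 p1]) (use GA_imp in blast)
  also have "\<dots> = 1 - mu p ?U (\<lambda>B. GA B n [] 0 0)" by (rule mu_compl[OF fin])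
  also have "\<dots> = (1 - (1 - p) ^ Suc n) ^ (2 ^ n)" using GA_mu[OF p0 p1, of "[]" n n 0 0] by simp
  finally show ?thesis .
qed

fun hseq :: "real \<Rightarrow> nat \<Rightarrow> real" where
  "hseq p 0 = p"
| "hseq p (Suc m) = (1 - (1 - hseq p m)^2)^2"

lemma hseq_01: "0 \<le> p \<Longrightarrow> p \<le> 1 \<Longrightarrow> 0 \<le> hseq p m \<and> hseq p m \<le> 1"
proof (induction m)
  case 0
  then show ?case by simp
next
  case (Suc m)
  let ?h = "hseq p m"
  have a: "0 \<le> (1 - ?h)^2" "(1 - ?h)^2 \<le> 1" using Suc.IH Suc.prems by (auto simp: power_le_one)
  then have "0 \<le> 1 - (1 - ?h)^2" "1 - (1 - ?h)^2 \<le> 1" by auto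
  then have "0 \<le> (1 - (1 - ?h)^2)^2" "(1 - (1 - ?h)^2)^2 \<le> 1" by (auto simp: power_le_one)
  then show ?case by simp
qed

lemma BB_up: "up (\<lambda>B. BB B m c pb)"
  unfolding up_def
proof (intro allI impI)
  fix B B' :: "(nat \<times> nat list) set" assume "B \<subseteq> B'"
  then show "BB B m c pb \<Longrightarrow> BB B' m c pb"
  proof (induction m arbitrary: c pb)
    case 0
    then show ?case by auto
  next
    case (Suc m)
    show ?case
    proof (simp only: BB.simps, intro ballI)
      fix x :: nat assume x: "x \<in> {1,2}"
      have all: "\<forall>x\<in>{1::nat,2}. \<exists>y\<in>{1,2}. BB B m (if x = 1 then Suc c else c) (pb @ [y])"
        using Suc.prems(1) by (simp only: BB.simps)
      obtain y where "y \<in> {1,2}" "BB B m (if x = 1 then Suc c else c) (pb @ [y])"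
        using all x by blast
      then show "\<exists>y\<in>{1,2}. BB B' m (if x = 1 then Suc c else c) (pb @ [y])"
        using Suc.IH Suc.prems(2) by blast
    qed
  qed
qed

lemma BB_dep: "dep (\<lambda>B. BB B m c pb) (DB pb)"
proof (induction m arbitrary: c pb)
  case 0
  show ?case unfolding dep_def by (auto simp: DB_def)
next
  case (Suc m)
  have h: "BB B m c' (pb @ [y]) = BB (B \<inter> DB pb) m c' (pb @ [y])" for y c' B
  proof -
    have "dep (\<lambda>B. BB B m c' (pb @ [y])) (DB (pb @ [y]))" by (rule Suc.IH)
    moreover have "DB (pb @ [y]) \<subseteq> DB pb" by (auto simp: DB_def)
    ultimately have "dep (\<lambda>B. BB B m c' (pb @ [y])) (DB pb)" by (rule dep_mono)
    then show ?thesis unfolding dep_def by blast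
  qed
  show ?case unfolding dep_def
  proof
    fix B
    show "BB B (Suc m) c pb = BB (B \<inter> DB pb) (Suc m) c pb"
      by (simp only: BB.simps h[where B=B])
  qed
qed

lemma BB_mu:
  assumes p0: "0 \<le> p" and p1: "p \<le> 1"
  shows "length pb + m = n \<Longrightarrow> set pb \<subseteq> {1,2} \<Longrightarrow> c + m \<le> n \<Longrightarrow>
    hseq p m \<le> mu p (outcomes_aB n) (\<lambda>B. BB B m c pb)"
proof (induction m arbitrary: c pb)
  case 0
  have fin: "finite (outcomes_aB n)" by (rule finite_outcomes_aB)
  have "(c, pb) \<in> outcomes_aB n" using "0.prems" by (auto simp: outcomes_aB_def move_seqs_def)
  then have "mu p (outcomes_aB n) (\<lambda>B. (c, pb) \<in> B) = p" by (rule mu_single[OF fin])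
  then show ?case by simp
next
  case (Suc m)
  let ?U = "outcomes_aB n"
  have fin: "finite ?U" by (rule finite_outcomes_aB)
  let ?h = "hseq p m"
  have h01: "0 \<le> ?h" "?h \<le> 1" using hseq_01[OF p0 p1] by auto
  let ?Y = "\<lambda>c' B. BB B m c' (pb @ [1]) \<or> BB B m c' (pb @ [2])"
  have Ylow: "1 - (1 - ?h)^2 \<le> mu p ?U (?Y c')" if c': "c' + m \<le> n" for c'
  proof -
    have i1: "?h \<le> mu p ?U (\<lambda>B. BB B m c' (pb @ [1]))" using Suc.IH[of "pb @ [1]" c'] Suc.prems c' by simp
    have i2: "?h \<le> mu p ?U (\<lambda>B. BB B m c' (pb @ [2]))" using Suc.IH[of "pb @ [2]" c'] Suc.prems c' by simp
    have u1: "mu p ?U (\<lambda>B. BB B m c' (pb @ [1])) \<le> 1" and u2: "mu p ?U (\<lambda>B. BB B m c' (pb @ [2])) \<le> 1"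
      using mu_le1[OF fin p0 p1] by auto
    have "mu p ?U (?Y c') = mu p ?U (\<lambda>B. \<not> (\<not> BB B m c' (pb @ [1]) \<and> \<not> BB B m c' (pb @ [2])))"
      by (rule mu_cong) simp
    also have "\<dots> = 1 - mu p ?U (\<lambda>B. \<not> BB B m c' (pb @ [1]) \<and> \<not> BB B m c' (pb @ [2]))"
      by (rule mu_compl[OF fin])
    also have "mu p ?U (\<lambda>B. \<not> BB B m c' (pb @ [1]) \<and> \<not> BB B m c' (pb @ [2]))
        = mu p ?U (\<lambda>B. \<not> BB B m c' (pb @ [1])) * mu p ?U (\<lambda>B. \<not> BB B m c' (pb @ [2]))"
      by (rule mu_indep[OF fin _ dep_not[OF BB_dep] dep_not[OF BB_dep]]) (auto simp: DB_def)
    also have "\<dots> = (1 - mu p ?U (\<lambda>B. BB B m c' (pb @ [1]))) * (1 - mu p ?U (\<lambda>B. BB B m c' (pb @ [2])))"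
      using mu_compl[OF fin] by simp
    finally have eq: "mu p ?U (?Y c') = 1 - (1 - mu p ?U (\<lambda>B. BB B m c' (pb @ [1]))) * (1 - mu p ?U (\<lambda>B. BB B m c' (pb @ [2])))" .
    have "(1 - mu p ?U (\<lambda>B. BB B m c' (pb @ [1]))) * (1 - mu p ?U (\<lambda>B. BB B m c' (pb @ [2]))) \<le> (1 - ?h) * (1 - ?h)"
      using i1 i2 u1 u2 h01 by (intro mult_mono) auto
    then show ?thesis using eq by (simp add: power2_eq_square)
  qed
  have Y0: "0 \<le> 1 - (1 - ?h)^2" using h01 by (simp add: power_le_one)
  have upY: "up (?Y c')" for c' using BB_up[of m c' "pb @ [1]"] BB_up[of m c' "pb @ [2]"] unfolding up_def by blast
  have "hseq p (Suc m) = (1 - (1 - ?h)^2) * (1 - (1 - ?h)^2)" by (simp add: power2_eq_square)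
  also have "\<dots> \<le> mu p ?U (?Y (Suc c)) * mu p ?U (?Y c)"
    using Ylow[of "Suc c"] Ylow[of c] Suc.prems(3) Y0 by (intro mult_mono) auto
  also have "\<dots> \<le> mu p ?U (\<lambda>B. ?Y (Suc c) B \<and> ?Y c B)" by (rule harris[OF fin p0 p1 upY upY])
  also have "\<dots> = mu p ?U (\<lambda>B. BB B (Suc m) c pb)" by (rule mu_cong) auto
  finally show ?case .
qed

lemma P_aB_high_bound:
  assumes p0: "0 \<le> p" and p1: "p \<le> 1"
  shows "hseq p n \<le> P_aB n p"
  unfolding P_aB_mu using BB_mu[OF p0 p1, of "[]" n n 0] by simp

lemma pow_bound:
  fixes x :: real
  assumes x0: "0 \<le> x" and x1: "x \<le> 1"
  shows "(1 - x) ^ N \<le> 1 / (1 + real N * x)"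
proof -
  have b: "1 + real N * x \<le> (1 + x) ^ N" using Bernoulli_inequality[of x N] x0 by simp
  have pos: "0 < 1 + real N * x" using x0 by (simp add: add_pos_nonneg)
  have "(1 - x) ^ N * (1 + x) ^ N = (1 - x * x) ^ N" by (simp add: power_mult_distrib[symmetric] algebra_simps)
  also have "\<dots> \<le> 1" using x0 x1 by (intro power_le_one) (auto simp: mult_le_one)
  finally have c: "(1 - x) ^ N * (1 + x) ^ N \<le> 1" .
  have "(1 - x) ^ N * (1 + real N * x) \<le> (1 - x) ^ N * (1 + x) ^ N"
    using b x1 by (intro mult_left_mono) auto
  then have "(1 - x) ^ N * (1 + real N * x) \<le> 1" using c by linarith
  then show ?thesis using pos by (simp add: field_simps)
qed

lemma P_Ab_nonneg: "0 \<le> p \<Longrightarrow> p \<le> 1 \<Longrightarrow> 0 \<le> P_Ab n p"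
  unfolding P_Ab_mu by (rule mu_nonneg)

lemma P_aB_nonneg: "0 \<le> p \<Longrightarrow> p \<le> 1 \<Longrightarrow> 0 \<le> P_aB n p"
  unfolding P_aB_mu by (rule mu_nonneg)

lemma P_aB_le1: "0 \<le> p \<Longrightarrow> p \<le> 1 \<Longrightarrow> P_aB n p \<le> 1"
  unfolding P_aB_mu by (rule mu_le1[OF finite_outcomes_aB])

lemma Ab_low:
  assumes p0: "0 \<le> p" and p1: "p < 1/2"
  shows "(\<lambda>n. P_Ab n p) \<longlonglongrightarrow> 0"
proof -
  define c where "c = (1 - p) * (1 - 2 * p)"
  have c0: "0 < c" using p0 p1 by (simp add: c_def)
  have c1: "c \<le> 1"
  proof -
    have "(1 - p) * (1 - 2 * p) \<le> 1 * 1" using p0 p1 by (intro mult_mono) auto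
    then show ?thesis by (simp add: c_def)
  qed
  have bound: "P_Ab n p \<le> inverse c * inverse (real (Suc n))" for n
  proof -
    let ?x = "(1 - p) ^ Suc n"
    have x0: "0 \<le> ?x" using p1 by simp
    have x1: "?x \<le> 1" using p0 p1 by (intro power_le_one) auto
    have "P_Ab n p \<le> (1 - ?x) ^ (2 ^ n)" using P_Ab_low_bound[OF p0] p1 by simp
    also have "\<dots> \<le> 1 / (1 + real (2 ^ n) * ?x)" by (rule pow_bound[OF x0 x1])
    also have "1 / (1 + real (2 ^ n) * ?x) \<le> 1 / (c * real (Suc n))"
    proof (rule divide_left_mono)
      have e1: "(2 * (1 - p)) ^ n = (2::real) ^ n * (1 - p) ^ n" by (rule power_mult_distrib)
      have e: "real (2 ^ n) * ?x = (1 - p) * (2 * (1 - p)) ^ n"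
        unfolding e1 by (simp add: algebra_simps)
      have "1 + real n * (1 - 2 * p) \<le> (1 + (1 - 2 * p)) ^ n"
        using Bernoulli_inequality[of "1 - 2 * p" n] p1 by simp
      then have "1 + real n * (1 - 2 * p) \<le> (2 * (1 - p)) ^ n" by (simp add: algebra_simps)
      then have "(1 - p) * (1 + real n * (1 - 2 * p)) \<le> (1 - p) * (2 * (1 - p)) ^ n"
        using p1 by (intro mult_left_mono) auto
      then have "(1 - p) + c * real n \<le> real (2 ^ n) * ?x" unfolding e c_def by (simp add: algebra_simps)
      moreover have "c \<le> 1 - p"
      proof -
        have "(1 - p) * (1 - 2 * p) \<le> (1 - p) * 1" using p0 p1 by (intro mult_left_mono) auto
        then show ?thesis by (simp add: c_def)
      qed
      ultimately have "c * real (Suc n) \<le> real (2 ^ n) * ?x" by (simp add: algebra_simps)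
      then show "c * real (Suc n) \<le> 1 + real (2 ^ n) * ?x" using x0 by simp
      show "0 \<le> (1::real)" by simp
      show "0 < (1 + real (2 ^ n) * ?x) * (c * real (Suc n))" using c0 x0
        by (intro mult_pos_pos add_pos_nonneg) auto
    qed
    also have "1 / (c * real (Suc n)) = inverse c * inverse (real (Suc n))" by (simp add: field_simps)
    finally show ?thesis .
  qed
  have t: "(\<lambda>n. inverse c * inverse (real (Suc n))) \<longlonglongrightarrow> 0"
    by (rule tendsto_mult_right_zero[OF LIMSEQ_inverse_real_of_nat])
  show ?thesis
  proof (rule tendsto_sandwich[OF _ _ tendsto_const t])
    show "\<forall>\<^sub>F n in sequentially. 0 \<le> P_Ab n p" using P_Ab_nonneg[OF p0] p1 by simp
    show "\<forall>\<^sub>F n in sequentially. P_Ab n p \<le> inverse c * inverse (real (Suc n))" using bound by simp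
  qed
qed

lemma Ab_high:
  assumes p0: "7/8 \<le> p" and p1: "p \<le> 1"
  shows "\<not> (\<lambda>n. P_Ab n p) \<longlonglongrightarrow> 0"
proof
  assume P: "(\<lambda>n. P_Ab n p) \<longlonglongrightarrow> 0"
  have e0: "0 \<le> 1 - p" and e1: "1 - p \<le> 1/8" using p0 p1 by auto
  have "(\<lambda>n. P_Ab n p + fst (par (1 - p) n)) \<longlonglongrightarrow> 0 + 0"
    by (intro tendsto_add P par_tendsto[OF e0 e1])
  moreover have "\<exists>N. \<forall>n\<ge>N. 1 \<le> P_Ab n p + fst (par (1 - p) n)"
    using P_Ab_high[OF p1 p0] by (intro exI[of _ 0]) (auto simp: algebra_simps)
  ultimately have "1 \<le> (0::real) + 0" by (rule LIMSEQ_le_const)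
  then show False by simp
qed

lemma aB_low:
  assumes p0: "0 \<le> p" and p1: "p \<le> 1/16"
  shows "\<not> (\<lambda>n. P_aB n p) \<longlonglongrightarrow> 1"
proof
  assume P: "(\<lambda>n. P_aB n p) \<longlonglongrightarrow> 1"
  let ?e = "1 - (1 - p)^2"
  have e0: "0 \<le> ?e"
  proof -
    have "(1 - p)^2 \<le> 1^2" using p0 p1 by (intro power_mono) auto
    then show ?thesis by simp
  qed
  have e1: "?e \<le> 1/8"
  proof -
    have "?e = p * (2 - p)" by (simp add: power2_eq_square algebra_simps)
    also have "\<dots> \<le> (1/16) * 2" using p0 p1 by (intro mult_mono) auto
    finally show ?thesis by simp
  qed
  have P': "(\<lambda>n. P_aB (Suc n) p) \<longlonglongrightarrow> 1" using P by (rule LIMSEQ_Suc)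
  have "1 \<le> (0::real)"
  proof (rule LIMSEQ_le[OF P' par_tendsto[OF e0 e1]])
    show "\<exists>N. \<forall>n\<ge>N. P_aB (Suc n) p \<le> fst (par ?e n)" using P_aB_low[OF p0 p1] by blast
  qed
  then show False by simp
qed

definition rho :: real where "rho = (3 - sqrt 5) / 2"

lemma sqrt5: "2 < sqrt 5" "sqrt 5 < 9/4" "sqrt 5 * sqrt 5 = 5"
proof -
  show "2 < sqrt 5" by (rule real_less_rsqrt) simp
  have e: "sqrt ((9/4)^2) = (9/4::real)" by simp
  have "sqrt 5 < sqrt ((9/4::real)^2)" by (simp only: real_sqrt_less_iff) (simp add: power2_eq_square)
  then show "sqrt 5 < 9/4" using e by simp
  show "sqrt 5 * sqrt 5 = 5" by simp
qed

lemma hseq_tendsto: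
  assumes p0: "rho < p" and p1: "p \<le> 1"
  shows "(\<lambda>m. hseq p m) \<longlonglongrightarrow> 1"
proof -
  define r where "r = (sqrt 5 - 1) / 2"
  have r2: "r * r + r = 1" using sqrt5(3) by (simp add: r_def field_simps)
  have rlt: "r < 5/8" using sqrt5(2) by (simp add: r_def)
  have r0: "0 < r" using sqrt5(1) by (simp add: r_def)
  define t0 where "t0 = 1 - p"
  have t00: "0 \<le> t0" using p1 by (simp add: t0_def)
  have t0r: "t0 < r" using p0 by (simp add: t0_def r_def rho_def field_simps)
  define k where "k = 2 * t0 - t0 ^ 3"
  have k0: "0 \<le> k"
  proof -
    have "t0 * t0 \<le> 1" using t00 t0r rlt by (intro mult_le_one) auto
    then have "t0 * t0 * t0 \<le> 1 * t0" using t00 by (intro mult_right_mono) auto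
    then have "t0 ^ 3 \<le> t0" by (simp add: power3_eq_cube)
    then show ?thesis using t00 by (simp add: k_def)
  qed
  have k1: "k < 1"
  proof -
    have q: "t0 * t0 + t0 < 1"
    proof -
      have "t0 * t0 \<le> t0 * r" using t00 t0r by (intro mult_left_mono) auto
      also have "\<dots> < r * r" using t0r r0 by (intro mult_strict_right_mono) auto
      finally show ?thesis using t0r r2 by linarith
    qed
    have "0 < (1 - t0) * (1 - (t0 * t0 + t0))" using q t0r rlt by (intro mult_pos_pos) auto
    then show ?thesis by (simp add: k_def power3_eq_cube algebra_simps)
  qed
  define t where "t m = 1 - hseq p m" for m
  have pp: "0 \<le> p" using p0 sqrt5 by (simp add: rho_def)
  have step: "t (Suc m) = t m * (2 * t m - t m ^ 3)" for m
    by (simp add: t_def power2_eq_square power3_eq_cube algebra_simps)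
  have gmono: "2 * u - u ^ 3 \<le> k" if "0 \<le> u" "u \<le> t0" for u
  proof -
    have uu: "u * u \<le> t0 * t0" using that by (intro mult_mono) auto
    have ut: "u * t0 \<le> t0 * t0" using that t00 by (intro mult_right_mono) auto
    have "u * u + u * t0 + t0 * t0 \<le> 3 * (t0 * t0)" using uu ut by linarith
    also have "\<dots> \<le> 3 * ((5/8) * (5/8))" using t00 t0r rlt by (intro mult_left_mono mult_mono) auto
    finally have s: "u * u + u * t0 + t0 * t0 \<le> 2" by simp
    have "k - (2 * u - u ^ 3) = (t0 - u) * (2 - (u * u + u * t0 + t0 * t0))"
      by (simp add: k_def power3_eq_cube algebra_simps)
    moreover have "0 \<le> (t0 - u) * (2 - (u * u + u * t0 + t0 * t0))" using that s by (intro mult_nonneg_nonneg) auto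
    ultimately show ?thesis by linarith
  qed
  have bnd: "0 \<le> t m \<and> t m \<le> t0 * k ^ m" for m
  proof (induction m)
    case 0
    then show ?case using p1 by (simp add: t_def t0_def)
  next
    case (Suc m)
    have tm0: "0 \<le> t m" and tm1: "t m \<le> t0 * k ^ m" using Suc.IH by auto
    have km: "k ^ m \<le> 1" using k0 k1 by (intro power_le_one) auto
    have tmt0: "t m \<le> t0" using tm1 km t00 by (meson dual_order.trans mult_left_le)
    have g0: "0 \<le> 2 * t m - t m ^ 3"
    proof -
      have "t m * t m \<le> 1" using tm0 tmt0 t0r rlt by (intro mult_le_one) auto
      then have "t m * t m * t m \<le> 1 * t m" using tm0 by (intro mult_right_mono) auto
      then have "t m ^ 3 \<le> t m" by (simp add: power3_eq_cube)
      then show ?thesis using tm0 by simp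
    qed
    have "t (Suc m) \<le> t m * k" unfolding step using gmono[OF tm0 tmt0] tm0 by (intro mult_left_mono) auto
    also have "\<dots> \<le> t0 * k ^ m * k" using tm1 k0 by (intro mult_right_mono) auto
    finally have "t (Suc m) \<le> t0 * k ^ Suc m" by (simp add: algebra_simps)
    moreover have "0 \<le> t (Suc m)" unfolding step using tm0 g0 by simp
    ultimately show ?case by simp
  qed
  have hk: "(\<lambda>m. t0 * k ^ m) \<longlonglongrightarrow> 0" by (intro tendsto_mult_right_zero LIMSEQ_power_zero) (use k0 k1 in auto)
  have "t \<longlonglongrightarrow> 0"
  proof (rule tendsto_sandwich[OF _ _ tendsto_const hk])
    show "\<forall>\<^sub>F m in sequentially. 0 \<le> t m" by (rule always_eventually) (use bnd in blast)
    show "\<forall>\<^sub>F m in sequentially. t m \<le> t0 * k ^ m" by (rule always_eventually) (use bnd in blast)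
  qed
  then have "(\<lambda>m. 1 - t m) \<longlonglongrightarrow> 1 - 0" by (intro tendsto_diff tendsto_const)
  then show ?thesis by (simp add: t_def)
qed

lemma aB_high:
  assumes p0: "rho < p" and p1: "p \<le> 1"
  shows "(\<lambda>n. P_aB n p) \<longlonglongrightarrow> 1"
proof -
  have pp: "0 \<le> p" using p0 sqrt5 by (simp add: rho_def)
  show ?thesis
  proof (rule tendsto_sandwich[OF _ _ hseq_tendsto[OF p0 p1] tendsto_const])
    show "\<forall>\<^sub>F n in sequentially. hseq p n \<le> P_aB n p" using P_aB_high_bound[OF pp p1] by simp
    show "\<forall>\<^sub>F n in sequentially. P_aB n p \<le> 1" using P_aB_le1[OF pp p1] by simp
  qed
qed

theorem proposition3:
  shows "1/2 \<le> pc_Ab \<and> pc_Ab \<le> 7/8 \<and> 1/16 \<le> pc_aB \<and> pc_aB \<le> (3 - sqrt 5) / 2"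
proof -
  let ?S = "{p \<in> {0..1}. (\<lambda>n. P_Ab n p) \<longlonglongrightarrow> 0}"
  let ?T = "{p \<in> {0..1}. (\<lambda>n. P_aB n p) \<longlonglongrightarrow> 1}"
  have bS: "bdd_above ?S" by (rule bdd_aboveI[of _ 1]) auto
  have S0: "0 \<in> ?S" using Ab_low[of 0] by simp
  have bT: "bdd_below ?T" by (rule bdd_belowI[of _ 0]) auto
  have rho1: "rho < 1" using sqrt5 by (simp add: rho_def)
  have T1: "1 \<in> ?T" using aB_high[OF rho1] by simp
  have A: "1/2 \<le> pc_Ab" unfolding pc_Ab_def
  proof (rule dense_le_bounded[of 0])
    fix w :: real assume "0 < w" "w < 1/2"
    then have "w \<in> ?S" using Ab_low[of w] by simp
    then show "w \<le> Sup ?S" using bS by (rule cSup_upper)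
  qed simp
  have B: "pc_Ab \<le> 7/8" unfolding pc_Ab_def
  proof (rule cSup_least)
    show "?S \<noteq> {}" using S0 by blast
    fix x assume x: "x \<in> ?S"
    show "x \<le> 7/8"
    proof (rule ccontr)
      assume "\<not> x \<le> 7/8"
      then show False using Ab_high[of x] x by auto
    qed
  qed
  have C: "1/16 \<le> pc_aB" unfolding pc_aB_def
  proof (rule cInf_greatest)
    show "?T \<noteq> {}" using T1 by blast
    fix x assume x: "x \<in> ?T"
    show "1/16 \<le> x"
    proof (rule ccontr)
      assume "\<not> 1/16 \<le> x"
      then show False using aB_low[of x] x by auto
    qed
  qed
  have D: "pc_aB \<le> rho" unfolding pc_aB_def
  proof (rule dense_ge_bounded[OF rho1])
    fix w :: real assume w: "rho < w" "w < 1"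
    then have "0 \<le> w" using sqrt5 by (simp add: rho_def)
    then have "w \<in> ?T" using aB_high[of w] w by simp
    then show "Inf ?T \<le> w" using bT by (rule cInf_lower)
  qed
  show ?thesis using A B C D by (simp add: rho_def)
qed

end
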